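(* Let $G=(V,E,m,w)$ be a weighted graph admitting an intrinsic metric $\rho$ such that every ball $B_R(x)=\{y\in V:\rho(y,x)\le R\}$ ($x\in V$, $R>0$) is a finite set and the jump size $s:=\sup_{x\sim y}\rho(x,y)$ is finite. Suppose $G$ has polynomial volume growth with respect to $\rho$, i.e. there are $x_0\in V$ and constants $\alpha, C$ such that $m(B_R(x_0))\le C(1+R)^{\alpha}$ for all $R>0$. Then for all real $k\ge 1$, $$\dim \mathcal{P}_{2k}(G)\le (k+1)\dim \mathcal{H}_{2k}(G).$$
   Context: A weighted graph $G=(V,E,m,w)$ consists of a locally finite, simple, undirected, connected graph $(V,E)$, a symmetric edge weight $w:E\to(0,\infty)$, $\{x,y\}\mapsto w_{xy}=w_{yx}$ (extended by $w_{xy}=0$ if $x\not\sim y$), and a vertex weight $m:V\to(0,\infty)$; $m(\Omega)=\sum_{x\in\Omega}m_x$. The Laplacian is $\Delta f(x)=\sum_{y\sim x}\frac{w_{xy}}{m_x}(f(y)-f(x))$. A (pseudo)metric $\rho:V\times V\to[0,\infty)$ (symmetric, triangle inequality, $\rho(x,x)=0$) is intrinsic if $\sum_{y\sim x}w_{xy}\rho^2(x,y)\le m_x$ for all $x\in V$. $\mathcal{H}_k(G)$ is the space of functions $f$ on $V$ with $\Delta f=0$ such that there exist $x_0\in V$ and $C_f$ with $\sup_{x\in B_R(x_0)}|f(x)|\le C_f(1+R)^k$ for all $R>0$. An ancient solution of the heat equation is a function $u(x,t)$ on $V\times(-\infty,0]$, differentiable in $t$, with $\partial_t u(x,t)=\Delta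 u(x,t)$ for all $x\in V$, $t\le 0$. $\mathcal{P}_k(G)$ is the space of ancient solutions $u$ for which there are $x_0\in V$ and $C_u$ with $\sup_{(x,t)\in B_R(x_0)\times[-R^2,0]}|u(x,t)|\le C_u(1+R)^k$ for all $R>0$. *)

theory Defs
  imports "HOL-Analysis.Analysis"
begin

definition weighted_graph :: "('v \<Rightarrow> 'v \<Rightarrow> bool) \<Rightarrow> ('v \<Rightarrow> 'v \<Rightarrow> real) \<Rightarrow> ('v \<Rightarrow> real) \<Rightarrow> bool" where
  "weighted_graph adj w m \<longleftrightarrow>
     (\<forall>x. \<not> adj x x) \<and> (\<forall>x y. adj x y \<longrightarrow> adj y x) \<and>
     (\<forall>x. finite {y. adj x y}) \<and> (\<forall>x y. adj\<^sup>*\<^sup>* x y) \<and>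
     (\<forall>x y. w x y = w y x) \<and> (\<forall>x y. adj x y \<longrightarrow> w x y > 0) \<and>
     (\<forall>x y. \<not> adj x y \<longrightarrow> w x y = 0) \<and> (\<forall>x. m x > 0)"

definition laplacian :: "('v \<Rightarrow> 'v \<Rightarrow> bool) \<Rightarrow> ('v \<Rightarrow> 'v \<Rightarrow> real) \<Rightarrow> ('v \<Rightarrow> real) \<Rightarrow> ('v \<Rightarrow> real) \<Rightarrow> 'v \<Rightarrow> real" where
  "laplacian adj w m f x = (\<Sum>y\<in>{y. adj x y}. w x y / m x * (f y - f x))"

definition pseudometric :: "('v \<Rightarrow> 'v \<Rightarrow> real) \<Rightarrow> bool" where
  "pseudometric \<rho> \<longleftrightarrow> (\<forall>x y. \<rho> x y \<ge> 0) \<and> (\<forall>x. \<rho> x x = 0) \<and>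
     (\<forall>x y. \<rho> x y = \<rho> y x) \<and> (\<forall>x y z. \<rho> x z \<le> \<rho> x y + \<rho> y z)"

definition intrinsic_metric :: "('v \<Rightarrow> 'v \<Rightarrow> bool) \<Rightarrow> ('v \<Rightarrow> 'v \<Rightarrow> real) \<Rightarrow> ('v \<Rightarrow> real) \<Rightarrow> ('v \<Rightarrow> 'v \<Rightarrow> real) \<Rightarrow> bool" where
  "intrinsic_metric adj w m \<rho> \<longleftrightarrow> pseudometric \<rho> \<and>
     (\<forall>x. (\<Sum>y\<in>{y. adj x y}. w x y * (\<rho> x y)\<^sup>2) \<le> m x)"

definition ball_rho :: "('v \<Rightarrow> 'v \<Rightarrow> real) \<Rightarrow> 'v \<Rightarrow> real \<Rightarrow> 'v set" where
  "ball_rho \<rho> x R = {y. \<rho> y x \<le> R}"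

definition harmonic_poly :: "('v \<Rightarrow> 'v \<Rightarrow> bool) \<Rightarrow> ('v \<Rightarrow> 'v \<Rightarrow> real) \<Rightarrow> ('v \<Rightarrow> real) \<Rightarrow> ('v \<Rightarrow> 'v \<Rightarrow> real) \<Rightarrow> real \<Rightarrow> ('v \<Rightarrow> real) set" where
  "harmonic_poly adj w m \<rho> k = {f. (\<forall>x. laplacian adj w m f x = 0) \<and>
     (\<exists>x0 C. \<forall>R>0. \<forall>x\<in>ball_rho \<rho> x0 R. \<bar>f x\<bar> \<le> C * (1 + R) powr k)}"

text \<open>Functions are represented on 'v \<times> real, normalised to 0 for t > 0 so that
  they are determined by their values on V \<times> (-\<infinity>,0]. The time derivative at t = 0 is
  one-sided (within (-\<infinity>,0]).\<close>
definition ancient_poly :: "('v \<Rightarrow> 'v \<Rightarrow> bool) \<Rightarrow> ('v \<Rightarrow> 'v \<Rightarrow> real) \<Rightarrow> ('v \<Rightarrow> real) \<Rightarrow> ('v \<Rightarrow> 'v \<Rightarrow> real) \<Rightarrow> real \<Rightarrow> ('v \<times> real \<Rightarrow> real) set" where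
  "ancient_poly adj w m \<rho> k = {u. (\<forall>x t. t > 0 \<longrightarrow> u (x, t) = 0) \<and>
     (\<forall>x. \<forall>t\<le>0. ((\<lambda>s. u (x, s)) has_real_derivative
          laplacian adj w m (\<lambda>y. u (y, t)) x) (at t within {..0})) \<and>
     (\<exists>x0 C. \<forall>R>0. \<forall>x\<in>ball_rho \<rho> x0 R. \<forall>t\<in>{-(R\<^sup>2)..0}. \<bar>u (x, t)\<bar> \<le> C * (1 + R) powr k)}"

definition lin_indep_fun :: "('a \<Rightarrow> real) set \<Rightarrow> bool" where
  "lin_indep_fun F \<longleftrightarrow> (\<forall>c. (\<lambda>z. \<Sum>f\<in>F. c f * f z) = (\<lambda>z. 0) \<longrightarrow> (\<forall>f\<in>F. c f = 0))"

definition fdim :: "('a \<Rightarrow> real) set \<Rightarrow> ereal" where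
  "fdim S = (SUP F\<in>{F. finite F \<and> F \<subseteq> S \<and> lin_indep_fun F}. ereal (real (card F)))"

end

theory Submission
  imports Defs "HOL-Library.Function_Algebras"
begin


instantiation "fun" :: (type, real_vector) real_vector
begin
definition scaleR_fun :: "real \<Rightarrow> ('a \<Rightarrow> 'b) \<Rightarrow> 'a \<Rightarrow> 'b" where
  "scaleR_fun c f = (\<lambda>x. c *\<^sub>R f x)"
instance by standard (auto simp: scaleR_fun_def plus_fun_def algebra_simps)
end

lemma scaleR_fun_apply[simp]: "(c *\<^sub>R f) x = c *\<^sub>R f x" by (simp add: scaleR_fun_def)

lemma sum_fun_apply': "(\<Sum>i\<in>A. f i) x = (\<Sum>i\<in>A. f i x)"
  by (induction A rule: infinite_finite_induct) auto

lemma lin_indep_iff: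
  fixes F :: "('a \<Rightarrow> real) set"
  assumes "finite F" shows "lin_indep_fun F \<longleftrightarrow> independent F"
proof -
  have e: "(\<lambda>z. \<Sum>f\<in>F. c f * f z) = (\<Sum>f\<in>F. c f *\<^sub>R f)" for c
    by (auto simp: sum_fun_apply')
  show ?thesis unfolding lin_indep_fun_def using dependent_finite[OF assms] e
    by (auto simp: zero_fun_def)
qed

lemma rank_nullity_sets:
  fixes L :: "'a::real_vector \<Rightarrow> 'b::real_vector"
  assumes L: "linear L" and fin: "finite F" and ind: "independent F"
  shows "\<exists>B1 B2. B1 \<subseteq> span F \<and> (\<forall>b\<in>B1. L b = 0) \<and> independent B1 \<and> finite B1 \<and>
     B2 \<subseteq> L ` F \<and> independent B2 \<and> finite B2 \<and> card F \<le> card B1 + card B2"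
proof -
  define K where "K = span F \<inter> {u. L u = 0}"
  obtain B1 where B1: "B1 \<subseteq> K" "independent B1" "K \<subseteq> span B1"
    using maximal_independent_subset by blast
  have fB1: "finite B1"
    using independent_span_bound[OF fin B1(2)] B1(1) K_def by auto
  obtain B2 where B2: "B2 \<subseteq> L ` F" "independent B2" "L ` F \<subseteq> span B2"
    using maximal_independent_subset by blast
  have fB2: "finite B2" using B2(1) fin finite_subset by blast
  obtain C where C: "C \<subseteq> F" "inj_on L C" "B2 = L ` C"
    using B2(1) subset_image_inj by metis
  have cardC: "card C = card B2" using C card_image by metis
  have fC: "finite C" using C(1) fin finite_subset by blast
  have Fsub: "F \<subseteq> span (B1 \<union> C)"
  proof
    fix f assume f: "f \<in> F"
    have "L f \<in> span B2" using B2(3) f by auto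
    also have "span B2 = L ` span C" using C(3) linear_span_image[OF L] by simp
    finally obtain g where g: "g \<in> span C" "L f = L g" by auto
    have gF: "g \<in> span F" using g(1) C(1) span_mono by blast
    have "f - g \<in> K" unfolding K_def using g gF f
      by (auto simp: linear_diff[OF L] span_diff span_base)
    hence "f - g \<in> span B1" using B1(3) by auto
    hence "f - g \<in> span (B1 \<union> C)" using span_mono[of B1 "B1 \<union> C"] by auto
    moreover have "g \<in> span (B1 \<union> C)" using g(1) span_mono[of C "B1 \<union> C"] by auto
    ultimately have "(f - g) + g \<in> span (B1 \<union> C)" by (rule span_add)
    thus "f \<in> span (B1 \<union> C)" by simp
  qed
  have "card F = dim F" using dim_eq_card_independent[OF ind] by simp
  also have "\<dots> \<le> card (B1 \<union> C)" using dim_le_card[OF Fsub] fB1 fC by auto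
  also have "\<dots> \<le> card B1 + card C" by (rule card_Un_le)
  finally have "card F \<le> card B1 + card B2" using cardC by simp
  moreover have "B1 \<subseteq> span F" "\<forall>b\<in>B1. L b = 0" using B1(1) K_def by auto
  ultimately show ?thesis using B1 B2 fB1 fB2 by blast
qed


locale wg =
  fixes adj :: "'v \<Rightarrow> 'v \<Rightarrow> bool" and w :: "'v \<Rightarrow> 'v \<Rightarrow> real" and m :: "'v \<Rightarrow> real"
    and \<rho> :: "'v \<Rightarrow> 'v \<Rightarrow> real" and s :: real
  assumes G: "weighted_graph adj w m" and intr: "intrinsic_metric adj w m \<rho>"
    and bf: "\<forall>x. \<forall>R>0. finite (ball_rho \<rho> x R)"
    and jmp: "\<forall>x y. adj x y \<longrightarrow> \<rho> x y \<le> s" and s0: "s \<ge> 0"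
begin

lemma adj_sym: "adj x y \<Longrightarrow> adj y x" using G unfolding weighted_graph_def by blast
lemma fin_N: "finite {y. adj x y}" using G unfolding weighted_graph_def by blast
lemma w_sym: "w x y = w y x" using G unfolding weighted_graph_def by blast
lemma w_pos: "adj x y \<Longrightarrow> w x y > 0" using G unfolding weighted_graph_def by blast
lemma w_zero: "\<not> adj x y \<Longrightarrow> w x y = 0" using G unfolding weighted_graph_def by blast
lemma w_nonneg: "w x y \<ge> 0" using w_pos w_zero by (cases "adj x y") (auto intro: less_imp_le)
lemma m_pos: "m x > 0" using G unfolding weighted_graph_def by blast
lemma rho_nonneg: "\<rho> x y \<ge> 0" using intr unfolding intrinsic_metric_def pseudometric_def by blast
lemma rho_refl: "\<rho> x x = 0" using intr unfolding intrinsic_metric_def pseudometric_def by blast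
lemma rho_sym: "\<rho> x y = \<rho> y x" using intr unfolding intrinsic_metric_def pseudometric_def by blast
lemma rho_tri: "\<rho> x z \<le> \<rho> x y + \<rho> y z" using intr unfolding intrinsic_metric_def pseudometric_def by blast
lemma intr_sum: "(\<Sum>y\<in>{y. adj x y}. w x y * (\<rho> x y)\<^sup>2) \<le> m x"
  using intr unfolding intrinsic_metric_def by blast

lemma intr_T:
  assumes "finite T" shows "(\<Sum>y\<in>T. w x y * (\<rho> x y)\<^sup>2) \<le> m x"
proof -
  have "(\<Sum>y\<in>T. w x y * (\<rho> x y)\<^sup>2) = (\<Sum>y\<in>T \<inter> {y. adj x y}. w x y * (\<rho> x y)\<^sup>2)"
    using assms by (intro sum.mono_neutral_right) (auto simp: w_zero)
  also have "\<dots> \<le> (\<Sum>y\<in>{y. adj x y}. w x y * (\<rho> x y)\<^sup>2)"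
    using fin_N by (intro sum_mono2) (auto simp: w_nonneg)
  finally show ?thesis using intr_sum order_trans by blast
qed

abbreviation lap where "lap \<equiv> laplacian adj w m"

definition lapT :: "('v \<times> real \<Rightarrow> real) \<Rightarrow> 'v \<times> real \<Rightarrow> real" where
  "lapT u = (\<lambda>p. lap (\<lambda>y. u (y, snd p)) (fst p))"

lemma lapT_apply: "lapT u (x, t) = lap (\<lambda>y. u (y, t)) x" by (simp add: lapT_def)

definition cal :: "('v \<times> real \<Rightarrow> real) \<Rightarrow> bool" where
  "cal u \<longleftrightarrow> (\<forall>x. \<forall>t\<le>0. ((\<lambda>s. u (x, s)) has_real_derivative lapT u (x, t)) (at t within {..0}))"

lemma lap_T:
  assumes "finite T" "{y. adj x y} \<subseteq> T"
  shows "m x * lap f x = (\<Sum>y\<in>T. w x y * (f y - f x))"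
proof -
  have "m x * lap f x = (\<Sum>y\<in>{y. adj x y}. w x y * (f y - f x))"
    unfolding laplacian_def sum_distrib_left using m_pos[of x]
    by (intro sum.cong) auto
  also have "\<dots> = (\<Sum>y\<in>T. w x y * (f y - f x))"
    using assms by (intro sum.mono_neutral_left) (auto simp: w_zero)
  finally show ?thesis .
qed

lemma sym_sum:
  assumes "finite T"
  shows "(\<Sum>x\<in>T. \<Sum>y\<in>T. w x y * a x * (b y - b x)) =
     -(1/2) * (\<Sum>x\<in>T. \<Sum>y\<in>T. w x y * (a y - a x) * (b y - b x))"
proof -
  let ?S = "(\<Sum>x\<in>T. \<Sum>y\<in>T. w x y * a x * (b y - b x))"
  have "?S = (\<Sum>y\<in>T. \<Sum>x\<in>T. w x y * a x * (b y - b x))" by (rule sum.swap)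
  also have "\<dots> = (\<Sum>x\<in>T. \<Sum>y\<in>T. w x y * a y * (b x - b y))"
    by (simp add: w_sym)
  finally have "2 * ?S = ?S + (\<Sum>x\<in>T. \<Sum>y\<in>T. w x y * a y * (b x - b y))" by simp
  also have "\<dots> = (\<Sum>x\<in>T. \<Sum>y\<in>T. - (w x y * (a y - a x) * (b y - b x)))"
    by (simp add: sum.distrib[symmetric] algebra_simps)
  finally show ?thesis by (simp add: sum_negf)
qed

lemma green:
  assumes "finite T" "\<forall>x\<in>T. a x \<noteq> 0 \<longrightarrow> {y. adj x y} \<subseteq> T"
  shows "(\<Sum>x\<in>T. m x * a x * lap b x) =
     -(1/2) * (\<Sum>x\<in>T. \<Sum>y\<in>T. w x y * (a y - a x) * (b y - b x))"
proof -
  have "(\<Sum>x\<in>T. m x * a x * lap b x) = (\<Sum>x\<in>T. \<Sum>y\<in>T. w x y * a x * (b y - b x))"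
  proof (intro sum.cong refl)
    fix x assume x: "x \<in> T"
    show "m x * a x * lap b x = (\<Sum>y\<in>T. w x y * a x * (b y - b x))"
    proof (cases "a x = 0")
      case False
      hence "m x * lap b x = (\<Sum>y\<in>T. w x y * (b y - b x))" using assms x by (intro lap_T) auto
      hence "a x * (m x * lap b x) = a x * (\<Sum>y\<in>T. w x y * (b y - b x))" by simp
      thus ?thesis by (simp add: sum_distrib_left algebra_simps)
    qed simp
  qed
  also have "\<dots> = -(1/2) * (\<Sum>x\<in>T. \<Sum>y\<in>T. w x y * (a y - a x) * (b y - b x))"
    by (rule sym_sum[OF assms(1)])
  finally show ?thesis .
qed

lemma cal_lapT: assumes "cal u" shows "cal (lapT u)"
  unfolding cal_def
proof (intro allI impI)
  fix x and t :: real assume t: "t \<le> 0"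
  have "((\<lambda>s. \<Sum>y\<in>{y. adj x y}. w x y / m x * (u (y, s) - u (x, s))) has_real_derivative
     (\<Sum>y\<in>{y. adj x y}. w x y / m x * (lapT u (y, t) - lapT u (x, t)))) (at t within {..0})"
    using assms t unfolding cal_def by (intro DERIV_sum DERIV_cmult DERIV_diff) auto
  thus "((\<lambda>s. lapT u (x, s)) has_real_derivative lapT (lapT u) (x, t)) (at t within {..0})"
    by (simp add: lapT_apply laplacian_def)
qed

lemma cal_pow: "cal u \<Longrightarrow> cal ((lapT ^^ j) u)"
  by (induction j) (auto intro: cal_lapT)

lemma cal_cont:
  assumes "cal u" "S \<subseteq> {..0}" shows "continuous_on S (\<lambda>s. u (x, s))"
proof -
  have "continuous_on {..0} (\<lambda>s. u (x, s))"
    unfolding continuous_on_eq_continuous_within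
  proof
    fix t :: real assume "t \<in> {..0}"
    hence "((\<lambda>s. u (x, s)) has_real_derivative lapT u (x, t)) (at t within {..0})"
      using assms unfolding cal_def by auto
    thus "continuous (at t within {..0}) (\<lambda>s. u (x, s))"
      by (rule DERIV_continuous)
  qed
  thus ?thesis using assms(2) continuous_on_subset by blast
qed

end


context wg begin

definition eta :: "'v \<Rightarrow> real \<Rightarrow> 'v \<Rightarrow> real" where
  "eta cz R x = max 0 (min 1 ((2*R - \<rho> x cz)/R))"

lemma eta_nonneg: "eta cz R x \<ge> 0" by (simp add: eta_def)
lemma eta_le1: "eta cz R x \<le> 1" by (simp add: eta_def)
lemma eta_one: "R > 0 \<Longrightarrow> \<rho> x cz \<le> R \<Longrightarrow> eta cz R x = 1"
  by (simp add: eta_def field_simps)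
lemma eta_zero: "R > 0 \<Longrightarrow> \<rho> x cz \<ge> 2*R \<Longrightarrow> eta cz R x = 0"
  by (auto simp add: eta_def field_simps)
lemma eta_nz: "R > 0 \<Longrightarrow> eta cz R x \<noteq> 0 \<Longrightarrow> \<rho> x cz < 2*R"
  using eta_zero by force

lemma amgm2: "a * (b * 2) \<le> a\<^sup>2 + b\<^sup>2" for a b :: real
proof -
  have "0 \<le> (a - b)\<^sup>2" by simp
  thus ?thesis by (simp add: power2_eq_square algebra_simps)
qed

lemma clamp_lip: "\<bar>max 0 (min 1 a) - max 0 (min 1 b)\<bar> \<le> \<bar>a - b\<bar>" for a b :: real
  by (auto simp: max_def min_def abs_if)

lemma eta_lip:
  assumes R: "R > 0" shows "(eta cz R y - eta cz R x)\<^sup>2 \<le> (\<rho> x y)\<^sup>2 / R\<^sup>2"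
proof -
  have "\<bar>eta cz R y - eta cz R x\<bar> \<le> \<bar>(2*R - \<rho> y cz)/R - (2*R - \<rho> x cz)/R\<bar>"
    unfolding eta_def by (rule clamp_lip)
  also have "\<dots> = \<bar>\<rho> x cz - \<rho> y cz\<bar> / R"
  proof -
    have "(2*R - \<rho> y cz)/R - (2*R - \<rho> x cz)/R = (\<rho> x cz - \<rho> y cz)/R"
      using R by (simp add: field_simps)
    thus ?thesis using R by (simp add: abs_divide)
  qed
  also have "\<dots> \<le> \<rho> x y / R"
  proof -
    have "\<rho> x cz \<le> \<rho> x y + \<rho> y cz" "\<rho> y cz \<le> \<rho> y x + \<rho> x cz" using rho_tri by blast+
    hence "\<bar>\<rho> x cz - \<rho> y cz\<bar> \<le> \<rho> x y" using rho_sym[of x y] by auto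
    thus ?thesis using R by (simp add: divide_right_mono)
  qed
  finally have "\<bar>eta cz R y - eta cz R x\<bar> \<le> \<rho> x y / R" .
  hence "\<bar>eta cz R y - eta cz R x\<bar>\<^sup>2 \<le> (\<rho> x y / R)\<^sup>2"
    by (intro power_mono) auto
  thus ?thesis by (simp add: power_divide)
qed

lemma grad_eta_sum:
  assumes "finite T" "R > 0"
  shows "(\<Sum>y\<in>T. w x y * (eta cz R y - eta cz R x)\<^sup>2) \<le> m x / R\<^sup>2"
proof -
  have "(\<Sum>y\<in>T. w x y * (eta cz R y - eta cz R x)\<^sup>2) \<le> (\<Sum>y\<in>T. w x y * (\<rho> x y)\<^sup>2 / R\<^sup>2)"
    using eta_lip[OF assms(2)] w_nonneg
    by (intro sum_mono) (metis mult_left_mono times_divide_eq_right)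
  also have "\<dots> = (\<Sum>y\<in>T. w x y * (\<rho> x y)\<^sup>2) / R\<^sup>2" by (simp add: sum_divide_distrib)
  also have "\<dots> \<le> m x / R\<^sup>2" using intr_T[OF assms(1)] by (simp add: divide_right_mono)
  finally show ?thesis .
qed

lemma nbr: "adj x y \<Longrightarrow> \<rho> x cz \<le> r \<Longrightarrow> \<rho> y cz \<le> r + s"
  using rho_tri[of y cz x] rho_sym[of x y] jmp by fastforce

lemma ball_fin: "r > 0 \<Longrightarrow> finite (ball_rho \<rho> cz r)" using bf by blast

lemma green_cond:
  assumes "R > 0" "\<forall>x. eta cz R x = 0 \<longrightarrow> a x = 0"
  shows "\<forall>x\<in>ball_rho \<rho> cz (2*R+s). a x \<noteq> 0 \<longrightarrow> {y. adj x y} \<subseteq> ball_rho \<rho> cz (2*R+s)"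
  using assms eta_nz nbr unfolding ball_rho_def
  by (smt (verit, best) mem_Collect_eq subsetI)

lemma sym_swap:
  assumes "finite T"
  shows "(\<Sum>x\<in>T. \<Sum>y\<in>T. w x y * F x y) = (\<Sum>x\<in>T. \<Sum>y\<in>T. w x y * F y x)"
  by (subst sum.swap) (simp add: w_sym)

lemma grad_eta_weighted:
  assumes "finite T" "R > 0" "\<And>x. h x \<ge> 0"
  shows "(\<Sum>x\<in>T. \<Sum>y\<in>T. w x y * ((eta cz R y - eta cz R x)\<^sup>2 * (h x + h y)))
        \<le> 2 / R\<^sup>2 * (\<Sum>x\<in>T. m x * h x)"
proof -
  have "(\<Sum>x\<in>T. \<Sum>y\<in>T. w x y * ((eta cz R y - eta cz R x)\<^sup>2 * (h x + h y)))
     = (\<Sum>x\<in>T. \<Sum>y\<in>T. w x y * ((eta cz R y - eta cz R x)\<^sup>2 * h x))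
     + (\<Sum>x\<in>T. \<Sum>y\<in>T. w x y * ((eta cz R y - eta cz R x)\<^sup>2 * h y))"
    by (simp add: sum.distrib[symmetric] algebra_simps)
  also have "(\<Sum>x\<in>T. \<Sum>y\<in>T. w x y * ((eta cz R y - eta cz R x)\<^sup>2 * h y))
     = (\<Sum>x\<in>T. \<Sum>y\<in>T. w x y * ((eta cz R x - eta cz R y)\<^sup>2 * h x))"
    by (rule sym_swap[OF assms(1)])
  also have "\<dots> = (\<Sum>x\<in>T. \<Sum>y\<in>T. w x y * ((eta cz R y - eta cz R x)\<^sup>2 * h x))"
    by (simp add: power2_commute)
  also have "(\<Sum>x\<in>T. \<Sum>y\<in>T. w x y * ((eta cz R y - eta cz R x)\<^sup>2 * h x))
     = (\<Sum>x\<in>T. h x * (\<Sum>y\<in>T. w x y * (eta cz R y - eta cz R x)\<^sup>2))"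
    by (simp add: sum_distrib_left algebra_simps)
  also have "\<dots> \<le> (\<Sum>x\<in>T. h x * (m x / R\<^sup>2))"
    using grad_eta_sum[OF assms(1,2)] assms(3) by (intro sum_mono mult_left_mono) auto
  finally show ?thesis by (simp add: sum_distrib_left sum_divide_distrib algebra_simps)
qed

lemma enA:
  assumes R: "R > 0" and T: "T = ball_rho \<rho> cz (2*R+s)"
  shows "(\<Sum>x\<in>T. m x * (eta cz R x)\<^sup>2 * g x * lap g x) \<le>
     -(1/2) * (\<Sum>x\<in>T. \<Sum>y\<in>T. w x y * (eta cz R y * g y - eta cz R x * g x)\<^sup>2)
     + 1/(2*R\<^sup>2) * (\<Sum>x\<in>T. m x * (g x)\<^sup>2)"
proof -
  let ?e = "eta cz R"
  have fT: "finite T" using T ball_fin R s0 by simp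
  have "(\<Sum>x\<in>T. m x * (?e x)\<^sup>2 * g x * lap g x) = (\<Sum>x\<in>T. m x * ((?e x)\<^sup>2 * g x) * lap g x)"
    by (simp add: algebra_simps)
  also have "\<dots> = -(1/2) * (\<Sum>x\<in>T. \<Sum>y\<in>T. w x y * ((?e y)\<^sup>2 * g y - (?e x)\<^sup>2 * g x) * (g y - g x))"
    using fT green_cond[OF R, of cz "\<lambda>x. (?e x)\<^sup>2 * g x"] T by (intro green) auto
  also have "\<dots> \<le> -(1/2) * (\<Sum>x\<in>T. \<Sum>y\<in>T. w x y * (?e y * g y - ?e x * g x)\<^sup>2)
     + 1/4 * (\<Sum>x\<in>T. \<Sum>y\<in>T. w x y * ((?e y - ?e x)\<^sup>2 * ((g x)\<^sup>2 + (g y)\<^sup>2)))"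
  proof -
    have pt: "w x y * (?e y * g y - ?e x * g x)\<^sup>2 - 1/2 * (w x y * ((?e y - ?e x)\<^sup>2 * ((g x)\<^sup>2 + (g y)\<^sup>2)))
       \<le> w x y * ((?e y)\<^sup>2 * g y - (?e x)\<^sup>2 * g x) * (g y - g x)" for x y
    proof -
      have id: "((?e y)\<^sup>2 * g y - (?e x)\<^sup>2 * g x) * (g y - g x)
          = (?e y * g y - ?e x * g x)\<^sup>2 - (?e y - ?e x)\<^sup>2 * (g x * g y)"
        by (simp add: power2_eq_square algebra_simps)
      have "(?e y - ?e x)\<^sup>2 * (g x * g y) \<le> (?e y - ?e x)\<^sup>2 * (((g x)\<^sup>2 + (g y)\<^sup>2)/2)"
        by (intro mult_left_mono) (auto simp: field_simps amgm2)
      hence "(?e y * g y - ?e x * g x)\<^sup>2 - 1/2 * ((?e y - ?e x)\<^sup>2 * ((g x)\<^sup>2 + (g y)\<^sup>2))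
          \<le> ((?e y)\<^sup>2 * g y - (?e x)\<^sup>2 * g x) * (g y - g x)" by (simp add: id)
      from mult_left_mono[OF this w_nonneg[of x y]] show ?thesis by (simp add: algebra_simps)
    qed
    have "(\<Sum>x\<in>T. \<Sum>y\<in>T. w x y * (?e y * g y - ?e x * g x)\<^sup>2)
        - 1/2 * (\<Sum>x\<in>T. \<Sum>y\<in>T. w x y * ((?e y - ?e x)\<^sup>2 * ((g x)\<^sup>2 + (g y)\<^sup>2)))
       \<le> (\<Sum>x\<in>T. \<Sum>y\<in>T. w x y * ((?e y)\<^sup>2 * g y - (?e x)\<^sup>2 * g x) * (g y - g x))"
      using pt by (simp add: sum_distrib_left sum_subtractf[symmetric] sum_mono)
    thus ?thesis by simp
  qed
  also have "\<dots> \<le> -(1/2) * (\<Sum>x\<in>T. \<Sum>y\<in>T. w x y * (?e y * g y - ?e x * g x)\<^sup>2)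
     + 1/4 * (2 / R\<^sup>2 * (\<Sum>x\<in>T. m x * (g x)\<^sup>2))"
    using grad_eta_weighted[OF fT R, of "\<lambda>x. (g x)\<^sup>2"] by simp
  finally show ?thesis by simp
qed

lemma enB_pt:
  fixes ex ey vx vy gx gy R :: real
  assumes R: "R > 0"
  shows "-(1/2) * ((ey\<^sup>2 * vy - ex\<^sup>2 * vx) * (gy - gx)) \<le>
     -(1/2) * (ex * ey * ((vy - vx) * (gy - gx)))
     + R\<^sup>2/4 * ((ey - ex)\<^sup>2 * ((ex\<^sup>2 * vx\<^sup>2) + (ey\<^sup>2 * vy\<^sup>2)))
     + (gy - gx)\<^sup>2 / (2*R\<^sup>2)"
proof -
  define P where "P = (ey - ex) * (ex * vx + ey * vy)"
  define Q where "Q = gy - gx"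
  have id: "(ey\<^sup>2 * vy - ex\<^sup>2 * vx) * (gy - gx) = ex * ey * ((vy - vx) * (gy - gx)) + P * Q"
    unfolding P_def Q_def by (simp add: power2_eq_square algebra_simps)
  have "0 \<le> (R * P / 2 + Q / R)\<^sup>2" by simp
  also have "(R * P / 2 + Q / R)\<^sup>2 = R\<^sup>2 * P\<^sup>2 / 4 + P * Q + Q\<^sup>2 / R\<^sup>2"
    using R by (simp add: power2_eq_square field_simps)
  finally have pq: "-(1/2) * (P * Q) \<le> R\<^sup>2 * P\<^sup>2 / 8 + Q\<^sup>2 / (2 * R\<^sup>2)" by simp
  have "(ex * vx + ey * vy)\<^sup>2 \<le> 2 * ((ex * vx)\<^sup>2 + (ey * vy)\<^sup>2)"
    using amgm2[of "ex * vx" "ey * vy"] by (simp add: power2_eq_square algebra_simps)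
  hence "P\<^sup>2 \<le> (ey - ex)\<^sup>2 * (2 * ((ex * vx)\<^sup>2 + (ey * vy)\<^sup>2))"
    unfolding P_def by (simp add: power_mult_distrib mult_left_mono)
  hence "R\<^sup>2 / 8 * P\<^sup>2 \<le> R\<^sup>2 / 8 * ((ey - ex)\<^sup>2 * (2 * ((ex * vx)\<^sup>2 + (ey * vy)\<^sup>2)))"
    using R by (intro mult_left_mono) auto
  hence "R\<^sup>2 * P\<^sup>2 / 8 \<le> R\<^sup>2 / 4 * ((ey - ex)\<^sup>2 * ((ex * vx)\<^sup>2 + (ey * vy)\<^sup>2))"
    by (simp add: field_simps)
  with pq id show ?thesis unfolding Q_def by (simp add: power_mult_distrib algebra_simps)
qed

lemma enB:
  assumes R: "R > 0" and T: "T = ball_rho \<rho> cz (2*R+s)"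
  shows "(\<Sum>x\<in>T. m x * (eta cz R x)\<^sup>2 * v x * lap g x) \<le>
     -(1/2) * (\<Sum>x\<in>T. \<Sum>y\<in>T. w x y * (eta cz R x * eta cz R y * ((v y - v x) * (g y - g x))))
     + 1/2 * (\<Sum>x\<in>T. m x * ((eta cz R x)\<^sup>2 * (v x)\<^sup>2))
     + 1/(2*R\<^sup>2) * (\<Sum>x\<in>T. \<Sum>y\<in>T. w x y * (g y - g x)\<^sup>2)"
proof -
  let ?e = "eta cz R"
  have fT: "finite T" using T ball_fin R s0 by simp
  have e1: "(\<Sum>x\<in>T. \<Sum>y\<in>T. w x y * (-(1/2) * (?e x * ?e y * ((v y - v x) * (g y - g x)))))
     = -(1/2) * (\<Sum>x\<in>T. \<Sum>y\<in>T. w x y * (?e x * ?e y * ((v y - v x) * (g y - g x))))"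
    by (simp add: sum_distrib_left mult.left_commute)
  have e2: "(\<Sum>x\<in>T. \<Sum>y\<in>T. w x y * (R\<^sup>2/4 * ((?e y - ?e x)\<^sup>2 * (((?e x)\<^sup>2 * (v x)\<^sup>2) + ((?e y)\<^sup>2 * (v y)\<^sup>2)))))
     = R\<^sup>2/4 * (\<Sum>x\<in>T. \<Sum>y\<in>T. w x y * ((?e y - ?e x)\<^sup>2 * (((?e x)\<^sup>2 * (v x)\<^sup>2) + ((?e y)\<^sup>2 * (v y)\<^sup>2))))"
    by (simp add: sum_distrib_left mult.left_commute)
  have e3: "(\<Sum>x\<in>T. \<Sum>y\<in>T. w x y * ((g y - g x)\<^sup>2 / (2*R\<^sup>2)))
     = 1/(2*R\<^sup>2) * (\<Sum>x\<in>T. \<Sum>y\<in>T. w x y * (g y - g x)\<^sup>2)"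
    by (simp add: sum_distrib_left mult.left_commute)
  have "(\<Sum>x\<in>T. m x * (?e x)\<^sup>2 * v x * lap g x) = (\<Sum>x\<in>T. m x * ((?e x)\<^sup>2 * v x) * lap g x)"
    by (simp add: algebra_simps)
  also have "\<dots> = -(1/2) * (\<Sum>x\<in>T. \<Sum>y\<in>T. w x y * ((?e y)\<^sup>2 * v y - (?e x)\<^sup>2 * v x) * (g y - g x))"
    using fT green_cond[OF R, of cz "\<lambda>x. (?e x)\<^sup>2 * v x"] T by (intro green) auto
  also have "\<dots> = (\<Sum>x\<in>T. \<Sum>y\<in>T. w x y * (-(1/2) * (((?e y)\<^sup>2 * v y - (?e x)\<^sup>2 * v x) * (g y - g x))))"
    by (simp add: sum_distrib_left algebra_simps)
  also have "\<dots> \<le> (\<Sum>x\<in>T. \<Sum>y\<in>T. w x y * (-(1/2) * (?e x * ?e y * ((v y - v x) * (g y - g x)))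
     + R\<^sup>2/4 * ((?e y - ?e x)\<^sup>2 * (((?e x)\<^sup>2 * (v x)\<^sup>2) + ((?e y)\<^sup>2 * (v y)\<^sup>2)))
     + (g y - g x)\<^sup>2 / (2*R\<^sup>2)))"
    by (intro sum_mono mult_left_mono enB_pt R w_nonneg)
  also have "\<dots> = (\<Sum>x\<in>T. \<Sum>y\<in>T. w x y * (-(1/2) * (?e x * ?e y * ((v y - v x) * (g y - g x)))))
     + (\<Sum>x\<in>T. \<Sum>y\<in>T. w x y * (R\<^sup>2/4 * ((?e y - ?e x)\<^sup>2 * (((?e x)\<^sup>2 * (v x)\<^sup>2) + ((?e y)\<^sup>2 * (v y)\<^sup>2)))))
     + (\<Sum>x\<in>T. \<Sum>y\<in>T. w x y * ((g y - g x)\<^sup>2 / (2*R\<^sup>2)))"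
    by (simp only: distrib_left sum.distrib)
  also have "\<dots> = -(1/2) * (\<Sum>x\<in>T. \<Sum>y\<in>T. w x y * (?e x * ?e y * ((v y - v x) * (g y - g x))))
     + R\<^sup>2/4 * (\<Sum>x\<in>T. \<Sum>y\<in>T. w x y * ((?e y - ?e x)\<^sup>2 * (((?e x)\<^sup>2 * (v x)\<^sup>2) + ((?e y)\<^sup>2 * (v y)\<^sup>2))))
     + 1/(2*R\<^sup>2) * (\<Sum>x\<in>T. \<Sum>y\<in>T. w x y * (g y - g x)\<^sup>2)"
    by (simp only: e1 e2 e3)
  also have "\<dots> \<le> -(1/2) * (\<Sum>x\<in>T. \<Sum>y\<in>T. w x y * (?e x * ?e y * ((v y - v x) * (g y - g x))))
     + R\<^sup>2/4 * (2 / R\<^sup>2 * (\<Sum>x\<in>T. m x * ((?e x)\<^sup>2 * (v x)\<^sup>2)))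
     + 1/(2*R\<^sup>2) * (\<Sum>x\<in>T. \<Sum>y\<in>T. w x y * (g y - g x)\<^sup>2)"
  proof -
    have "(\<Sum>x\<in>T. \<Sum>y\<in>T. w x y * ((?e y - ?e x)\<^sup>2 * (((?e x)\<^sup>2 * (v x)\<^sup>2) + ((?e y)\<^sup>2 * (v y)\<^sup>2))))
       \<le> 2 / R\<^sup>2 * (\<Sum>x\<in>T. m x * ((?e x)\<^sup>2 * (v x)\<^sup>2))"
      by (rule grad_eta_weighted[where h="\<lambda>x. (?e x)\<^sup>2 * (v x)\<^sup>2" and cz=cz, OF fT R]) simp
    hence "R\<^sup>2/4 * (\<Sum>x\<in>T. \<Sum>y\<in>T. w x y * ((?e y - ?e x)\<^sup>2 * (((?e x)\<^sup>2 * (v x)\<^sup>2) + ((?e y)\<^sup>2 * (v y)\<^sup>2))))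
       \<le> R\<^sup>2/4 * (2 / R\<^sup>2 * (\<Sum>x\<in>T. m x * ((?e x)\<^sup>2 * (v x)\<^sup>2)))"
      by (rule mult_left_mono) simp
    thus ?thesis by linarith
  qed
  finally show ?thesis using R by simp
qed

end


lemma time_lemma:
  fixes \<Phi> \<phi> a b :: "real \<Rightarrow> real" and T0 c :: real
  assumes T0: "T0 > 0" and c: "c \<ge> 0"
    and deriv: "\<And>t. t \<in> {-T0..0} \<Longrightarrow> (\<Phi> has_real_derivative \<phi> t) (at t within {-T0..0})"
    and c\<phi>: "continuous_on {-T0..0} \<phi>" and ca: "continuous_on {-T0..0} a"
    and cb: "continuous_on {-T0..0} b"
    and nn: "\<And>t. t \<in> {-T0..0} \<Longrightarrow> \<Phi> t \<ge> 0 \<and> a t \<ge> 0 \<and> b t \<ge> 0"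
    and ineq: "\<And>t. t \<in> {-T0..0} \<Longrightarrow> a t \<le> -c * \<phi> t + b t"
  shows "integral {-T0/2..0} a \<le> 2 * (c/T0 * integral {-T0..0} \<Phi> + integral {-T0..0} b)"
proof -
  define I where "I = {-T0..0}"
  define ch where "ch t = (t + T0)/T0" for t
  have c\<Phi>: "continuous_on I \<Phi>"
    unfolding continuous_on_eq_continuous_within I_def
    using deriv DERIV_continuous by blast
  have cch: "continuous_on I ch" unfolding ch_def using T0 by (intro continuous_intros) auto
  have ch01: "t \<in> I \<Longrightarrow> 0 \<le> ch t \<and> ch t \<le> 1" for t using T0 by (auto simp: I_def ch_def field_simps)
  have ftc: "((\<lambda>t. \<Phi> t / T0 + ch t * \<phi> t) has_integral (ch 0 * \<Phi> 0 - ch (-T0) * \<Phi> (-T0))) I"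
    unfolding I_def
  proof (rule fundamental_theorem_of_calculus)
    show "- T0 \<le> 0" using T0 by simp
    fix t assume t: "t \<in> {-T0..0}"
    have "((\<lambda>t. ch t * \<Phi> t) has_real_derivative (1/T0) * \<Phi> t + ch t * \<phi> t) (at t within {-T0..0})"
      unfolding ch_def using deriv[OF t] T0
      by (auto intro!: derivative_eq_intros simp: field_simps power2_eq_square)
    thus "((\<lambda>t. ch t * \<Phi> t) has_vector_derivative \<Phi> t / T0 + ch t * \<phi> t) (at t within {-T0..0})"
      by (simp add: has_real_derivative_iff_has_vector_derivative)
  qed
  have ch0: "ch 0 = 1" "ch (-T0) = 0" using T0 by (auto simp: ch_def)
  have int_ftc: "integral I (\<lambda>t. \<Phi> t / T0 + ch t * \<phi> t) = \<Phi> 0"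
    using ftc ch0 by (simp add: integral_unique)
  have iI: "continuous_on I f \<Longrightarrow> f integrable_on I" for f :: "real \<Rightarrow> real"
    unfolding I_def by (simp add: integrable_continuous_interval)
  have i1: "(\<lambda>t. \<Phi> t / T0) integrable_on I" using T0 by (intro iI continuous_intros c\<Phi>) auto
  have i2: "(\<lambda>t. ch t * \<phi> t) integrable_on I" by (intro iI continuous_intros cch) (use c\<phi> I_def in auto)
  have i3: "(\<lambda>t. ch t * a t) integrable_on I" by (intro iI continuous_intros cch) (use ca I_def in auto)
  have i4: "b integrable_on I" using iI cb I_def by auto
  have "integral I (\<lambda>t. \<Phi> t / T0) + integral I (\<lambda>t. ch t * \<phi> t) = \<Phi> 0"
    using int_ftc integral_add[OF i1 i2] by simp
  hence e1: "integral I (\<lambda>t. ch t * \<phi> t) = \<Phi> 0 - integral I \<Phi> / T0"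
    by (simp add: integral_divide)
  have "integral I (\<lambda>t. ch t * a t) \<le> integral I (\<lambda>t. -c * (ch t * \<phi> t) + b t)"
  proof (rule integral_le[OF i3])
    show "(\<lambda>t. -c * (ch t * \<phi> t) + b t) integrable_on I"
      using integrable_add[OF integrable_cmul[OF i2, of "-c"] i4] by simp
    fix t assume t: "t \<in> I"
    have "ch t * a t \<le> ch t * (-c * \<phi> t + b t)"
      using ch01[OF t] ineq t unfolding I_def by (intro mult_left_mono) auto
    also have "\<dots> \<le> -c * (ch t * \<phi> t) + b t"
      using ch01[OF t] nn[of t] t unfolding I_def
      by (simp add: algebra_simps mult_left_le)
    finally show "ch t * a t \<le> -c * (ch t * \<phi> t) + b t" .
  qed
  also have "\<dots> = -c * integral I (\<lambda>t. ch t * \<phi> t) + integral I b"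
    using integral_diff[OF i4 integrable_cmul[OF i2, of c]] by (simp add: algebra_simps)
  also have "\<dots> = -c * \<Phi> 0 + c / T0 * integral I \<Phi> + integral I b"
    unfolding e1 by (simp add: algebra_simps)
  also have "\<dots> \<le> c / T0 * integral I \<Phi> + integral I b"
    using c nn[of 0] T0 unfolding I_def by simp
  finally have main: "integral I (\<lambda>t. ch t * a t) \<le> c / T0 * integral I \<Phi> + integral I b" .
  have sub: "{-T0/2..0} \<subseteq> I" using T0 by (auto simp: I_def)
  have "integral {-T0/2..0} a \<le> integral {-T0/2..0} (\<lambda>t. 2 * (ch t * a t))"
  proof (rule integral_le)
    show "a integrable_on {-T0/2..0}"
      by (rule integrable_continuous_interval) (use ca sub I_def continuous_on_subset in blast)
    show "(\<lambda>t. 2 * (ch t * a t)) integrable_on {-T0/2..0}"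
      by (rule integrable_continuous_interval, intro continuous_intros)
         (use ca cch sub I_def continuous_on_subset in blast)+
    fix t assume t: "t \<in> {-T0/2..0}"
    hence "2 * ch t \<ge> 1" using T0 by (auto simp: ch_def field_simps)
    moreover have "a t \<ge> 0" using nn[of t] t sub I_def by auto
    ultimately have "1 * a t \<le> 2 * ch t * a t" by (intro mult_right_mono) auto
    thus "a t \<le> 2 * (ch t * a t)" by simp
  qed
  also have "\<dots> \<le> integral I (\<lambda>t. 2 * (ch t * a t))"
  proof (rule integral_subset_le[OF sub])
    show "(\<lambda>t. 2 * (ch t * a t)) integrable_on {-T0/2..0}"
      by (rule integrable_continuous_interval, intro continuous_intros)
         (use ca cch sub I_def continuous_on_subset in blast)+
    show "(\<lambda>t. 2 * (ch t * a t)) integrable_on I" using integrable_cmul[OF i3, of 2] by simp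
    show "\<forall>t\<in>I. 0 \<le> 2 * (ch t * a t)" using ch01 nn I_def by auto
  qed
  also have "\<dots> = 2 * integral I (\<lambda>t. ch t * a t)" by simp
  finally have fin: "integral {-T0/2..0} a \<le> 2 * integral I (\<lambda>t. ch t * a t)" .
  have "2 * integral I (\<lambda>t. ch t * a t) \<le> 2 * (c / T0 * integral I \<Phi> + integral I b)"
    using main by simp
  with fin show ?thesis unfolding I_def by linarith
qed


lemma sq_deriv:
  "(f has_real_derivative f') (at t within S) \<Longrightarrow>
   ((\<lambda>s. (f s)\<^sup>2) has_real_derivative (2 * f t * f')) (at t within S)"
  by (auto intro!: derivative_eq_intros)

lemma cint: "continuous_on {a..b} f \<Longrightarrow> f integrable_on {a..b}" for f :: "real \<Rightarrow> real"
  by (simp add: integrable_continuous_interval)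

lemma intmono:
  fixes f g :: "real \<Rightarrow> real"
  assumes "continuous_on {a..b} f" "continuous_on {a..b} g" "\<And>t. t \<in> {a..b} \<Longrightarrow> f t \<le> g t"
  shows "integral {a..b} f \<le> integral {a..b} g"
  using assms by (intro integral_le cint) auto

lemma intnonneg:
  fixes f :: "real \<Rightarrow> real"
  assumes "continuous_on {a..b} f" "\<And>t. t \<in> {a..b} \<Longrightarrow> 0 \<le> f t"
  shows "0 \<le> integral {a..b} f"
  using assms by (intro integral_nonneg cint) auto

context wg begin

lemma cal_deriv: "cal u \<Longrightarrow> t \<le> 0 \<Longrightarrow> S \<subseteq> {..0} \<Longrightarrow>
   ((\<lambda>s. u (x, s)) has_real_derivative lapT u (x, t)) (at t within S)"
  unfolding cal_def by (meson DERIV_subset)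

lemma dsum_mono_sub:
  fixes f :: "'v \<Rightarrow> 'v \<Rightarrow> real"
  assumes "finite T1" "T \<subseteq> T1" "\<And>x y. f x y \<ge> 0"
  shows "(\<Sum>x\<in>T. \<Sum>y\<in>T. f x y) \<le> (\<Sum>x\<in>T1. \<Sum>y\<in>T1. f x y)"
proof -
  have fT: "finite T" using assms finite_subset by blast
  have "(\<Sum>y\<in>T. f x y) \<le> (\<Sum>y\<in>T1. f x y)" for x
    by (rule sum_mono2) (use assms in auto)
  hence "(\<Sum>x\<in>T. \<Sum>y\<in>T. f x y) \<le> (\<Sum>x\<in>T. \<Sum>y\<in>T1. f x y)"
    by (simp add: sum_mono)
  also have "\<dots> \<le> (\<Sum>x\<in>T1. \<Sum>y\<in>T1. f x y)"
    using assms by (intro sum_mono2 sum_nonneg) auto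
  finally show ?thesis .
qed

lemma one_step:
  assumes u: "cal u" and R: "R > 0" and tau: "\<tau> > 0"
  shows "integral {-\<tau>..0} (\<lambda>t. \<Sum>x\<in>ball_rho \<rho> cz R. m x * (lapT u (x, t))\<^sup>2)
     \<le> 4 * (1/(4*\<tau>) + 1/R\<^sup>2)\<^sup>2 * integral {-(4*\<tau>)..0} (\<lambda>t. \<Sum>x\<in>ball_rho \<rho> cz (4*R+3 * s). m x * (u (x, t))\<^sup>2)"
proof -
  define R1 where "R1 = 2*R+s"
  define T where "T = ball_rho \<rho> cz (2*R+s)"
  define T1 where "T1 = ball_rho \<rho> cz (2*R1+s)"
  define e where "e = eta cz R"
  define e1 where "e1 = eta cz R1"
  have R1: "R1 > 0" "R1 \<ge> R" using R s0 by (auto simp: R1_def)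
  have fT: "finite T" using ball_fin R s0 T_def by simp
  have fT1: "finite T1" using ball_fin R1 s0 T1_def by simp
  have TT1: "T \<subseteq> T1" using R1 s0 by (auto simp: T_def T1_def R1_def ball_rho_def)
  have T1eq: "T1 = ball_rho \<rho> cz (4*R+3 * s)" by (simp add: T1_def R1_def algebra_simps)
  have e01: "0 \<le> e x" "e x \<le> 1" for x using eta_nonneg eta_le1 e_def by auto
  have e101: "0 \<le> e1 x" "e1 x \<le> 1" for x using eta_nonneg eta_le1 e1_def by auto
  have cu: "continuous_on S (\<lambda>t. u (x, t))" if "S \<subseteq> {..0}" for S x using cal_cont[OF u that] .
  have cv: "continuous_on S (\<lambda>t. lapT u (x, t))" if "S \<subseteq> {..0}" for S x
    using cal_cont[OF cal_lapT[OF u] that] .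
  define A where "A t = (\<Sum>x\<in>T. m x * ((e x)\<^sup>2 * (lapT u (x, t))\<^sup>2))" for t
  define D where "D t = 1/4 * (\<Sum>x\<in>T. \<Sum>y\<in>T. w x y * (e x * e y * (u (y, t) - u (x, t))\<^sup>2))" for t
  define D' where "D' t = 1/4 * (\<Sum>x\<in>T. \<Sum>y\<in>T. w x y * (e x * e y *
      (2 * (u (y, t) - u (x, t)) * (lapT u (y, t) - lapT u (x, t)))))" for t
  define \<Gamma> where "\<Gamma> t = (\<Sum>x\<in>T. \<Sum>y\<in>T. w x y * (u (y, t) - u (x, t))\<^sup>2)" for t
  define E where "E t = (\<Sum>x\<in>T1. m x * ((e1 x)\<^sup>2 * (u (x, t))\<^sup>2))" for t
  define E' where "E' t = (\<Sum>x\<in>T1. m x * ((e1 x)\<^sup>2 * (2 * u (x, t) * lapT u (x, t))))" for t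
  define Gt where "Gt t = (\<Sum>x\<in>T1. \<Sum>y\<in>T1. w x y * (e1 y * u (y, t) - e1 x * u (x, t))\<^sup>2)" for t
  define M where "M t = (\<Sum>x\<in>T1. m x * (u (x, t))\<^sup>2)" for t
  have cS: "{-(4*\<tau>)..0} \<subseteq> {..0}" by auto
  let ?I = "{-(4*\<tau>)..0}"
  have cA: "continuous_on S A" if "S \<subseteq> {..0}" for S
    unfolding A_def by (intro continuous_intros cv that)
  have cD: "continuous_on S D" if "S \<subseteq> {..0}" for S
    unfolding D_def by (intro continuous_intros cu that)
  have cD': "continuous_on S D'" if "S \<subseteq> {..0}" for S
    unfolding D'_def by (intro continuous_intros cu cv that)
  have c\<Gamma>: "continuous_on S \<Gamma>" if "S \<subseteq> {..0}" for S
    unfolding \<Gamma>_def by (intro continuous_intros cu that)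
  have cE: "continuous_on S E" if "S \<subseteq> {..0}" for S
    unfolding E_def by (intro continuous_intros cu that)
  have cE': "continuous_on S E'" if "S \<subseteq> {..0}" for S
    unfolding E'_def by (intro continuous_intros cu cv that)
  have cG: "continuous_on S Gt" if "S \<subseteq> {..0}" for S
    unfolding Gt_def by (intro continuous_intros cu that)
  have cM: "continuous_on S M" if "S \<subseteq> {..0}" for S
    unfolding M_def by (intro continuous_intros cu that)
  
  have stepB: "integral {-\<tau>..0} A \<le> 2 * (2/(2*\<tau>) * integral {-(2*\<tau>)..0} D + integral {-(2*\<tau>)..0} (\<lambda>t. \<Gamma> t / R\<^sup>2))"
  proof -
    have "integral {-(2*\<tau>)/2..0} A \<le> 2 * (2/(2*\<tau>) * integral {-(2*\<tau>)..0} D + integral {-(2*\<tau>)..0} (\<lambda>t. \<Gamma> t / R\<^sup>2))"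
    proof (rule time_lemma[where \<phi>=D'])
      show "2 * \<tau> > 0" "(2::real) \<ge> 0" using tau by auto
      show "continuous_on {-(2*\<tau>)..0} D'" "continuous_on {-(2*\<tau>)..0} A"
        "continuous_on {-(2*\<tau>)..0} (\<lambda>t. \<Gamma> t / R\<^sup>2)"
        using cD' cA c\<Gamma> R by (auto intro!: continuous_intros)
      fix t assume t: "t \<in> {-(2*\<tau>)..0}"
      have sub: "{-(2*\<tau>)..0} \<subseteq> {..0}" by auto
      have tn: "t \<le> 0" using t by auto
      show "(D has_real_derivative D' t) (at t within {-(2*\<tau>)..0})"
        unfolding D_def D'_def
        by (intro DERIV_sum DERIV_cmult sq_deriv DERIV_diff cal_deriv[OF u tn sub])
      show "D t \<ge> 0 \<and> A t \<ge> 0 \<and> \<Gamma> t / R\<^sup>2 \<ge> 0"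
        unfolding D_def A_def \<Gamma>_def using e01 m_pos[THEN less_imp_le] w_nonneg
        by (auto intro!: sum_nonneg mult_nonneg_nonneg divide_nonneg_nonneg)
      define g where "g = (\<lambda>x. u (x, t))"
      define v where "v = (\<lambda>x. lapT u (x, t))"
      have lg: "lap g x = v x" for x by (simp add: g_def v_def lapT_apply)
      have "(\<Sum>x\<in>T. m x * (e x)\<^sup>2 * v x * lap g x) \<le>
         -(1/2) * (\<Sum>x\<in>T. \<Sum>y\<in>T. w x y * (e x * e y * ((v y - v x) * (g y - g x))))
         + 1/2 * (\<Sum>x\<in>T. m x * ((e x)\<^sup>2 * (v x)\<^sup>2))
         + 1/(2*R\<^sup>2) * (\<Sum>x\<in>T. \<Sum>y\<in>T. w x y * (g y - g x)\<^sup>2)"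
        unfolding e_def by (rule enB[OF R T_def])
      moreover have "(\<Sum>x\<in>T. m x * (e x)\<^sup>2 * v x * lap g x) = A t"
        unfolding A_def lg by (simp add: v_def power2_eq_square algebra_simps)
      moreover have "(\<Sum>x\<in>T. m x * ((e x)\<^sup>2 * (v x)\<^sup>2)) = A t" by (simp add: A_def v_def)
      moreover have "(\<Sum>x\<in>T. \<Sum>y\<in>T. w x y * (g y - g x)\<^sup>2) = \<Gamma> t" by (simp add: \<Gamma>_def g_def)
      moreover have "(\<Sum>x\<in>T. \<Sum>y\<in>T. w x y * (e x * e y * ((v y - v x) * (g y - g x)))) = 2 * D' t"
      proof -
        have eq: "w x y * (e x * e y * (2 * (u (y, t) - u (x, t)) * (lapT u (y, t) - lapT u (x, t))))
           = 2 * (w x y * (e x * e y * ((v y - v x) * (g y - g x))))" for x y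
          by (simp add: g_def v_def algebra_simps)
        have "D' t = 1/4 * (\<Sum>x\<in>T. \<Sum>y\<in>T. 2 * (w x y * (e x * e y * ((v y - v x) * (g y - g x)))))"
          unfolding D'_def by (simp only: eq)
        also have "\<dots> = 1/2 * (\<Sum>x\<in>T. \<Sum>y\<in>T. w x y * (e x * e y * ((v y - v x) * (g y - g x))))"
          by (simp add: sum_distrib_left[symmetric])
        finally show ?thesis by simp
      qed
      ultimately show "A t \<le> -2 * D' t + \<Gamma> t / R\<^sup>2" by (simp add: field_simps)
    qed
    thus ?thesis by simp
  qed
  have DG: "integral {-(2*\<tau>)..0} D \<le> integral {-(2*\<tau>)..0} (\<lambda>t. \<Gamma> t / 4)"
  proof (rule intmono)
    show "continuous_on {-(2*\<tau>)..0} D" "continuous_on {-(2*\<tau>)..0} (\<lambda>t. \<Gamma> t / 4)"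
      using cD c\<Gamma> by (auto intro!: continuous_intros)
    fix t
    have "w x y * (e x * e y * (u (y, t) - u (x, t))\<^sup>2) \<le> w x y * (u (y, t) - u (x, t))\<^sup>2" for x y
    proof -
      have "e x * e y \<le> 1" using e01 by (simp add: mult_le_one)
      hence "e x * e y * (u (y, t) - u (x, t))\<^sup>2 \<le> 1 * (u (y, t) - u (x, t))\<^sup>2"
        by (intro mult_right_mono) auto
      thus ?thesis using w_nonneg by (simp add: mult_left_mono)
    qed
    hence "(\<Sum>x\<in>T. \<Sum>y\<in>T. w x y * (e x * e y * (u (y, t) - u (x, t))\<^sup>2)) \<le> \<Gamma> t"
      unfolding \<Gamma>_def by (intro sum_mono)
    thus "D t \<le> \<Gamma> t / 4" unfolding D_def by simp
  qed
  have int\<Gamma>: "integral {-(2*\<tau>)..0} (\<lambda>t. \<Gamma> t / 4) = integral {-(2*\<tau>)..0} \<Gamma> / 4"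
    "integral {-(2*\<tau>)..0} (\<lambda>t. \<Gamma> t / R\<^sup>2) = integral {-(2*\<tau>)..0} \<Gamma> / R\<^sup>2"
    by (simp_all add: integral_divide)
  have B2: "integral {-\<tau>..0} A \<le> 2 * (1/(4*\<tau>) + 1/R\<^sup>2) * integral {-(2*\<tau>)..0} \<Gamma>"
  proof -
    let ?g = "integral {-(2*\<tau>)..0} \<Gamma>" and ?d = "integral {-(2*\<tau>)..0} D"
    have s1: "integral {-\<tau>..0} A \<le> 2 * (1/\<tau> * ?d + ?g / R\<^sup>2)"
      using stepB int\<Gamma>(2) tau by simp
    have s2: "1/\<tau> * ?d \<le> 1/\<tau> * (?g / 4)" using DG int\<Gamma>(1) tau by (intro mult_left_mono) auto
    have s3: "2 * (1/\<tau> * (?g / 4) + ?g / R\<^sup>2) = 2 * (1/(4*\<tau>) + 1/R\<^sup>2) * ?g"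
      by (simp add: algebra_simps)
    have "2 * (1/\<tau> * ?d + ?g / R\<^sup>2) \<le> 2 * (1/\<tau> * (?g / 4) + ?g / R\<^sup>2)"
      by (rule mult_left_mono[OF add_right_mono[OF s2]]) simp
    with s1 have "integral {-\<tau>..0} A \<le> 2 * (1/\<tau> * (?g / 4) + ?g / R\<^sup>2)" by (rule order_trans)
    thus ?thesis unfolding s3 .
  qed
  
  have stepA: "integral {-(2*\<tau>)..0} Gt \<le> 2 * (1/(4*\<tau>) * integral ?I E + integral ?I (\<lambda>t. M t / R1\<^sup>2))"
  proof -
    have "integral {-(4*\<tau>)/2..0} Gt \<le> 2 * (1/(4*\<tau>) * integral ?I E + integral ?I (\<lambda>t. M t / R1\<^sup>2))"
    proof (rule time_lemma[where \<phi>=E'])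
      show "4 * \<tau> > 0" "(1::real) \<ge> 0" using tau by auto
      show "continuous_on ?I E'" "continuous_on ?I Gt" "continuous_on ?I (\<lambda>t. M t / R1\<^sup>2)"
        using cE' cG cM R1 by (auto intro!: continuous_intros)
      fix t assume t: "t \<in> ?I"
      have tn: "t \<le> 0" using t by auto
      show "(E has_real_derivative E' t) (at t within ?I)"
        unfolding E_def E'_def
        by (intro DERIV_sum DERIV_cmult sq_deriv cal_deriv[OF u tn cS])
      show "E t \<ge> 0 \<and> Gt t \<ge> 0 \<and> M t / R1\<^sup>2 \<ge> 0"
        unfolding E_def Gt_def M_def using m_pos[THEN less_imp_le] w_nonneg
        by (auto intro!: sum_nonneg mult_nonneg_nonneg divide_nonneg_nonneg)
      define g where "g = (\<lambda>x. u (x, t))"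
      have "(\<Sum>x\<in>T1. m x * (e1 x)\<^sup>2 * g x * lap g x) \<le>
         -(1/2) * (\<Sum>x\<in>T1. \<Sum>y\<in>T1. w x y * (e1 y * g y - e1 x * g x)\<^sup>2)
         + 1/(2*R1\<^sup>2) * (\<Sum>x\<in>T1. m x * (g x)\<^sup>2)"
        unfolding e1_def by (rule enA[OF R1(1) T1_def])
      moreover have "(\<Sum>x\<in>T1. m x * (e1 x)\<^sup>2 * g x * lap g x) = E' t / 2"
        unfolding E'_def by (simp add: g_def lapT_apply sum_divide_distrib algebra_simps)
      moreover have "(\<Sum>x\<in>T1. \<Sum>y\<in>T1. w x y * (e1 y * g y - e1 x * g x)\<^sup>2) = Gt t"
        by (simp add: Gt_def g_def)
      moreover have "(\<Sum>x\<in>T1. m x * (g x)\<^sup>2) = M t" by (simp add: M_def g_def)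
      ultimately show "Gt t \<le> -1 * E' t + M t / R1\<^sup>2" by (simp add: field_simps)
    qed
    thus ?thesis by simp
  qed
  have EM: "integral ?I E \<le> integral ?I M"
  proof (rule intmono)
    show "continuous_on ?I E" "continuous_on ?I M" using cE cM by auto
    fix t
    have "m x * ((e1 x)\<^sup>2 * (u (x, t))\<^sup>2) \<le> m x * (u (x, t))\<^sup>2" for x
    proof -
      have "(e1 x)\<^sup>2 \<le> 1" using e101[of x] by (simp add: power_le_one)
      hence "(e1 x)\<^sup>2 * (u (x, t))\<^sup>2 \<le> 1 * (u (x, t))\<^sup>2" by (intro mult_right_mono) auto
      thus ?thesis using m_pos[of x] by (simp add: mult_left_mono)
    qed
    thus "E t \<le> M t" unfolding E_def M_def by (intro sum_mono)
  qed
  have M0: "integral ?I M \<ge> 0"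
    using cM by (intro intnonneg) (auto simp: M_def intro!: sum_nonneg mult_nonneg_nonneg m_pos[THEN less_imp_le])
  have A2: "integral {-(2*\<tau>)..0} Gt \<le> 2 * (1/(4*\<tau>) + 1/R\<^sup>2) * integral ?I M"
  proof -
    have iM: "integral ?I (\<lambda>t. M t / R1\<^sup>2) = integral ?I M / R1\<^sup>2" by (simp add: integral_divide)
    have r: "1/R1\<^sup>2 \<le> 1/R\<^sup>2" using R R1 by (simp add: frac_le power_mono)
    have "1/(4*\<tau>) * integral ?I E \<le> 1/(4*\<tau>) * integral ?I M" using EM tau by (simp add: divide_right_mono)
    moreover have "integral ?I M / R1\<^sup>2 \<le> integral ?I M / R\<^sup>2"
      using r M0 by (metis divide_inverse inverse_eq_divide mult_left_mono)
    ultimately show ?thesis using stepA iM by (simp add: field_simps)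
  qed
  have \<Gamma>G: "integral {-(2*\<tau>)..0} \<Gamma> \<le> integral {-(2*\<tau>)..0} Gt"
  proof (rule intmono)
    show "continuous_on {-(2*\<tau>)..0} \<Gamma>" "continuous_on {-(2*\<tau>)..0} Gt" using c\<Gamma> cG by auto
    fix t
    have "\<Gamma> t = (\<Sum>x\<in>T. \<Sum>y\<in>T. w x y * (e1 y * u (y, t) - e1 x * u (x, t))\<^sup>2)"
    proof -
      have "e1 x = 1" if "x \<in> T" for x
        using that eta_one[OF R1(1)] by (simp add: e1_def T_def R1_def ball_rho_def)
      thus ?thesis unfolding \<Gamma>_def by (intro sum.cong refl) auto
    qed
    also have "\<dots> \<le> Gt t" unfolding Gt_def
      using fT1 TT1 w_nonneg by (intro dsum_mono_sub) auto
    finally show "\<Gamma> t \<le> Gt t" .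
  qed
  have LA: "integral {-\<tau>..0} (\<lambda>t. \<Sum>x\<in>ball_rho \<rho> cz R. m x * (lapT u (x, t))\<^sup>2) \<le> integral {-\<tau>..0} A"
  proof (rule intmono)
    show "continuous_on {-\<tau>..0} (\<lambda>t. \<Sum>x\<in>ball_rho \<rho> cz R. m x * (lapT u (x, t))\<^sup>2)"
      by (intro continuous_intros cv) auto
    show "continuous_on {-\<tau>..0} A" using cA by auto
    fix t
    have sub: "ball_rho \<rho> cz R \<subseteq> T" using R s0 by (auto simp: T_def ball_rho_def)
    have "(\<Sum>x\<in>ball_rho \<rho> cz R. m x * (lapT u (x, t))\<^sup>2) = (\<Sum>x\<in>ball_rho \<rho> cz R. m x * ((e x)\<^sup>2 * (lapT u (x, t))\<^sup>2))"
      using eta_one[OF R] by (intro sum.cong refl) (auto simp: e_def ball_rho_def)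
    also have "\<dots> \<le> A t" unfolding A_def
      by (rule sum_mono2) (use fT sub in \<open>auto intro!: mult_nonneg_nonneg m_pos[THEN less_imp_le]\<close>)
    finally show "(\<Sum>x\<in>ball_rho \<rho> cz R. m x * (lapT u (x, t))\<^sup>2) \<le> A t" .
  qed
  have pos: "0 \<le> 2 * (1/(4*\<tau>) + 1/R\<^sup>2)" using tau R by auto
  have "integral {-\<tau>..0} (\<lambda>t. \<Sum>x\<in>ball_rho \<rho> cz R. m x * (lapT u (x, t))\<^sup>2)
      \<le> 2 * (1/(4*\<tau>) + 1/R\<^sup>2) * integral {-(2*\<tau>)..0} \<Gamma>" using LA B2 by linarith
  also have "\<dots> \<le> 2 * (1/(4*\<tau>) + 1/R\<^sup>2) * integral {-(2*\<tau>)..0} Gt"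
    using \<Gamma>G pos by (rule mult_left_mono)
  also have "\<dots> \<le> 2 * (1/(4*\<tau>) + 1/R\<^sup>2) * (2 * (1/(4*\<tau>) + 1/R\<^sup>2) * integral ?I M)"
    using A2 pos by (rule mult_left_mono)
  also have "\<dots> = 4 * (1/(4*\<tau>) + 1/R\<^sup>2)\<^sup>2 * integral ?I M"
  proof -
    have gen: "2 * a * (2 * a * b) = 4 * a\<^sup>2 * b" for a b :: real by (simp add: power2_eq_square)
    show ?thesis by (rule gen)
  qed
  finally show ?thesis unfolding M_def T1eq .
qed

end


context wg begin

definition Ig :: "('v \<times> real \<Rightarrow> real) \<Rightarrow> 'v \<Rightarrow> real \<Rightarrow> real \<Rightarrow> real" where
  "Ig u cz r \<tau> = integral {-\<tau>..0} (\<lambda>t. \<Sum>x\<in>ball_rho \<rho> cz r. m x * (u (x, t))\<^sup>2)"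

lemma Ig_cont: "cal u \<Longrightarrow> S \<subseteq> {..0} \<Longrightarrow>
   continuous_on S (\<lambda>t. \<Sum>x\<in>ball_rho \<rho> cz r. m x * (u (x, t))\<^sup>2)"
  by (intro continuous_intros cal_cont) auto

lemma Ig_integrand_nonneg: "0 \<le> (\<Sum>x\<in>ball_rho \<rho> cz r. m x * (u (x, t))\<^sup>2)"
  by (intro sum_nonneg mult_nonneg_nonneg m_pos[THEN less_imp_le]) auto

lemma Ig_nonneg: "cal u \<Longrightarrow> 0 \<le> Ig u cz r \<tau>"
  unfolding Ig_def
  by (cases "\<tau> \<ge> 0") (auto intro!: intnonneg Ig_cont Ig_integrand_nonneg)

lemma Ig_mono:
  assumes u: "cal u" and r: "0 < r" "r \<le> r'" and \<tau>: "0 \<le> \<tau>" "\<tau> \<le> \<tau>'"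
  shows "Ig u cz r \<tau> \<le> Ig u cz r' \<tau>'"
proof -
  have fin: "finite (ball_rho \<rho> cz r')" using ball_fin r by auto
  have sub: "ball_rho \<rho> cz r \<subseteq> ball_rho \<rho> cz r'" using r by (auto simp: ball_rho_def)
  have "Ig u cz r \<tau> \<le> integral {-\<tau>..0} (\<lambda>t. \<Sum>x\<in>ball_rho \<rho> cz r'. m x * (u (x, t))\<^sup>2)"
    unfolding Ig_def
  proof (rule intmono)
    show "continuous_on {-\<tau>..0} (\<lambda>t. \<Sum>x\<in>ball_rho \<rho> cz r. m x * (u (x, t))\<^sup>2)"
      "continuous_on {-\<tau>..0} (\<lambda>t. \<Sum>x\<in>ball_rho \<rho> cz r'. m x * (u (x, t))\<^sup>2)"
      using Ig_cont[OF u] by auto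
    fix t show "(\<Sum>x\<in>ball_rho \<rho> cz r. m x * (u (x, t))\<^sup>2) \<le> (\<Sum>x\<in>ball_rho \<rho> cz r'. m x * (u (x, t))\<^sup>2)"
      by (rule sum_mono2[OF fin sub]) (auto intro!: mult_nonneg_nonneg m_pos[THEN less_imp_le])
  qed
  also have "\<dots> \<le> Ig u cz r' \<tau>'"
    unfolding Ig_def
  proof (rule integral_subset_le)
    show "{-\<tau>..0} \<subseteq> {-\<tau>'..0}" using \<tau> by auto
    show "(\<lambda>t. \<Sum>x\<in>ball_rho \<rho> cz r'. m x * (u (x, t))\<^sup>2) integrable_on {-\<tau>..0}"
      "(\<lambda>t. \<Sum>x\<in>ball_rho \<rho> cz r'. m x * (u (x, t))\<^sup>2) integrable_on {-\<tau>'..0}"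
      using Ig_cont[OF u] by (auto intro!: cint)
    show "\<forall>t\<in>{-\<tau>'..0}. 0 \<le> (\<Sum>x\<in>ball_rho \<rho> cz r'. m x * (u (x, t))\<^sup>2)"
      using Ig_integrand_nonneg by auto
  qed
  finally show ?thesis .
qed

definition J :: "('v \<times> real \<Rightarrow> real) \<Rightarrow> 'v \<Rightarrow> real \<Rightarrow> real" where
  "J u cz r = Ig u cz r (r\<^sup>2)"

lemma J_step:
  assumes u: "cal u" and R: "R > 0" "R \<ge> s"
  shows "J (lapT u) cz R \<le> (25/4) / R^4 * J u cz (7 * R)"
proof -
  have "J (lapT u) cz R \<le> 4 * (1/(4*R\<^sup>2) + 1/R\<^sup>2)\<^sup>2 * Ig u cz (4*R + 3 * s) (4*R\<^sup>2)"
    using one_step[OF u R(1), of "R\<^sup>2" cz] R by (simp add: J_def Ig_def)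
  also have "4 * (1/(4*R\<^sup>2) + 1/R\<^sup>2)\<^sup>2 = (25/4) / R^4"
    using R by (simp add: field_simps power2_eq_square eval_nat_numeral)
  also have "Ig u cz (4*R + 3 * s) (4*R\<^sup>2) \<le> J u cz (7 * R)"
    unfolding J_def using R s0 by (intro Ig_mono[OF u]) (auto simp: power2_eq_square)
  hence "(25/4) / R^4 * Ig u cz (4*R + 3 * s) (4*R\<^sup>2) \<le> (25/4) / R^4 * J u cz (7 * R)"
    using R by (intro mult_left_mono) auto
  finally show ?thesis .
qed

lemma J_iter:
  "cal u \<Longrightarrow> R > 0 \<Longrightarrow> R \<ge> s \<Longrightarrow>
   J ((lapT ^^ j) u) cz R \<le> (25/4)^j / R^(4*j) * J u cz (7^j * R)"
proof (induction j arbitrary: u)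
  case 0 thus ?case by simp
next
  case (Suc j)
  have cu': "cal (lapT u)" using cal_lapT Suc.prems by blast
  have R7: "7^j * R > 0" "7^j * R \<ge> R" using Suc.prems by auto
  have "J ((lapT ^^ Suc j) u) cz R = J ((lapT ^^ j) (lapT u)) cz R" by (simp only: funpow_Suc_right o_apply)
  also have "\<dots> \<le> (25/4)^j / R^(4*j) * J (lapT u) cz (7^j * R)"
    using Suc.IH[OF cu'] Suc.prems by blast
  also have "\<dots> \<le> (25/4)^j / R^(4*j) * ((25/4) / R^4 * J u cz (7^(Suc j) * R))"
  proof -
    have "J (lapT u) cz (7^j * R) \<le> (25/4) / (7^j * R)^4 * J u cz (7 * (7^j * R))"
      using R7 Suc.prems by (intro J_step[OF Suc.prems(1) R7(1)]) linarith
    also have "\<dots> \<le> (25/4) / R^4 * J u cz (7 * (7^j * R))"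
    proof (rule mult_right_mono)
      show "0 \<le> J u cz (7 * (7^j * R))" unfolding J_def using Ig_nonneg Suc.prems by blast
      have "R^4 \<le> (7^j * R)^4" using R7 Suc.prems by (intro power_mono) auto
      thus "(25/4) / (7^j * R)^4 \<le> (25/4) / R^4" using Suc.prems
        by (intro divide_left_mono) auto
    qed
    finally show ?thesis using Suc.prems by (intro mult_left_mono) (auto simp: mult.assoc)
  qed
  also have "\<dots> = (25/4)^(Suc j) / R^(4 * Suc j) * J u cz (7^(Suc j) * R)"
    by (simp add: power_add field_simps)
  finally show ?case .
qed

end


context wg begin

lemma J_growth:
  assumes u: "cal u"
    and ub: "\<forall>r>0. \<forall>x\<in>ball_rho \<rho> cz r. \<forall>t\<in>{-(r\<^sup>2)..0}. \<bar>u (x, t)\<bar> \<le> C * (1 + r) powr (2*k)"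
    and vb: "\<forall>r>0. (\<Sum>y\<in>ball_rho \<rho> cz r. m y) \<le> Cv * (1 + r) powr a"
    and N: "a + 4*k \<le> real N" and r: "r > 0"
  shows "J u cz r \<le> r\<^sup>2 * (C\<^sup>2 * Cv * (1 + r)^N)"
proof -
  let ?B = "C * (1 + r) powr (2*k)"
  have czb: "cz \<in> ball_rho \<rho> cz r" using r by (simp add: ball_rho_def rho_refl)
  have fin: "finite (ball_rho \<rho> cz r)" using ball_fin r by auto
  have volpos: "0 < (\<Sum>y\<in>ball_rho \<rho> cz r. m y)"
    using fin czb m_pos by (intro sum_pos2[of _ cz]) (auto intro: less_imp_le)
  have Cv: "Cv > 0"
  proof -
    have "0 < Cv * (1 + r) powr a" using volpos vb r by fastforce
    thus ?thesis using r by (simp add: zero_less_mult_iff)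
  qed
  have pt: "(\<Sum>x\<in>ball_rho \<rho> cz r. m x * (u (x, t))\<^sup>2) \<le> C\<^sup>2 * Cv * (1 + r)^N" if t: "t \<in> {-(r\<^sup>2)..0}" for t
  proof -
    have "(\<Sum>x\<in>ball_rho \<rho> cz r. m x * (u (x, t))\<^sup>2) \<le> (\<Sum>x\<in>ball_rho \<rho> cz r. m x * ?B\<^sup>2)"
    proof (rule sum_mono)
      fix x assume x: "x \<in> ball_rho \<rho> cz r"
      have "\<bar>u (x, t)\<bar> \<le> ?B" using ub r x t by blast
      hence "\<bar>u (x, t)\<bar>\<^sup>2 \<le> ?B\<^sup>2" by (intro power_mono) auto
      thus "m x * (u (x, t))\<^sup>2 \<le> m x * ?B\<^sup>2" using m_pos[of x] by (simp add: mult_left_mono)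
    qed
    also have "\<dots> = ?B\<^sup>2 * (\<Sum>y\<in>ball_rho \<rho> cz r. m y)" by (simp add: sum_distrib_right mult.commute)
    also have "\<dots> \<le> ?B\<^sup>2 * (Cv * (1 + r) powr a)" using vb r by (intro mult_left_mono) auto
    also have "\<dots> = C\<^sup>2 * Cv * (1 + r) powr (4*k + a)"
      using r by (simp add: power2_eq_square powr_add[symmetric] algebra_simps)
    also have "\<dots> \<le> C\<^sup>2 * Cv * (1 + r) powr (real N)"
      using Cv N r by (intro mult_left_mono powr_mono) auto
    also have "\<dots> = C\<^sup>2 * Cv * (1 + r)^N" using r by (simp add: powr_realpow)
    finally show ?thesis .
  qed
  have "J u cz r \<le> integral {-(r\<^sup>2)..0} (\<lambda>t. C\<^sup>2 * Cv * (1 + r)^N)"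
    unfolding J_def Ig_def
    by (intro intmono Ig_cont[OF u] pt) (auto intro!: continuous_intros)
  also have "\<dots> = r\<^sup>2 * (C\<^sup>2 * Cv * (1 + r)^N)" by simp
  finally show ?thesis .
qed

lemma J_decay_bound:
  assumes u: "cal u"
    and ub: "\<forall>r>0. \<forall>x\<in>ball_rho \<rho> cz r. \<forall>t\<in>{-(r\<^sup>2)..0}. \<bar>u (x, t)\<bar> \<le> C * (1 + r) powr (2*k)"
    and vb: "\<forall>r>0. (\<Sum>y\<in>ball_rho \<rho> cz r. m y) \<le> Cv * (1 + r) powr a"
    and N: "a + 4*k \<le> real N" and j: "N + 3 \<le> 4 * j"
  shows "\<exists>K\<ge>0. \<forall>R\<ge>max 1 s. J ((lapT ^^ j) u) cz R \<le> K / R"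
proof -
  define K0 where "K0 = C\<^sup>2 * Cv"
  have K0: "K0 \<ge> 0"
  proof -
    have "0 < (\<Sum>y\<in>ball_rho \<rho> cz 1. m y)"
      using ball_fin[of 1 cz] m_pos by (intro sum_pos2[of _ cz]) (auto intro: less_imp_le simp: ball_rho_def rho_refl)
    moreover have "(\<Sum>y\<in>ball_rho \<rho> cz 1. m y) \<le> Cv * (1 + 1) powr a" using vb[rule_format, of 1] by simp
    ultimately have "0 < Cv * (1 + 1) powr a" by linarith
    hence "Cv > 0" by (simp add: zero_less_mult_iff)
    thus ?thesis by (simp add: K0_def)
  qed
  define K where "K = (25/4)^j * (7^j)\<^sup>2 * K0 * (2 * 7^j)^N"
  have K: "K \<ge> 0" using K0 by (simp add: K_def)
  have "J ((lapT ^^ j) u) cz R \<le> K / R" if R: "R \<ge> max 1 s" for R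
  proof -
    have R1: "R \<ge> 1" "R > 0" "R \<ge> s" using R by auto
    have r7: "7^j * R > 0" using R1 by simp
    have "J ((lapT ^^ j) u) cz R \<le> (25/4)^j / R^(4*j) * J u cz (7^j * R)"
      using J_iter[OF u R1(2) R1(3)] .
    also have "\<dots> \<le> (25/4)^j / R^(4*j) * ((7^j * R)\<^sup>2 * (K0 * (1 + 7^j * R)^N))"
      using J_growth[OF u ub vb N r7] R1 by (intro mult_left_mono) (auto simp: K0_def)
    also have "\<dots> \<le> (25/4)^j / R^(4*j) * ((7^j * R)\<^sup>2 * (K0 * (2 * 7^j * R)^N))"
    proof -
      have "1 + 7^j * R \<le> 2 * 7^j * R"
      proof -
        have "1 \<le> 7^j * R" using R1 by (simp add: one_le_power mult_ge1_I)
        thus ?thesis by (simp add: mult.commute)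
      qed
      hence "(1 + 7^j * R)^N \<le> (2 * 7^j * R)^N" using R1 by (intro power_mono) auto
      thus ?thesis using K0 R1 by (intro mult_left_mono) auto
    qed
    also have "\<dots> = K * R^(N+2) / R^(4*j)"
      using R1 by (simp add: K_def power_mult_distrib power_add field_simps power2_eq_square)
    also have "\<dots> \<le> K / R"
    proof -
      have "R^(N+2) * R \<le> R^(4*j)"
      proof -
        have "R^(N+2) * R = R^(N+3)" by (simp add: power_add eval_nat_numeral)
        also have "\<dots> \<le> R^(4*j)" using R1 j by (intro power_increasing) auto
        finally show ?thesis .
      qed
      hence "K * (R^(N+2) * R) \<le> K * R^(4*j)" using K by (intro mult_left_mono) auto
      thus ?thesis using R1 by (simp add: field_simps)
    qed
    finally show ?thesis .
  qed
  thus ?thesis using K by blast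
qed

lemma decay:
  assumes u: "cal u"
    and ub: "\<forall>r>0. \<forall>x\<in>ball_rho \<rho> cz r. \<forall>t\<in>{-(r\<^sup>2)..0}. \<bar>u (x, t)\<bar> \<le> C * (1 + r) powr (2*k)"
    and vb: "\<forall>r>0. (\<Sum>y\<in>ball_rho \<rho> cz r. m y) \<le> Cv * (1 + r) powr a"
    and N: "a + 4*k \<le> real N" and j: "N + 3 \<le> 4 * j" and t0: "t0 \<le> 0"
  shows "(lapT ^^ j) u (x, t0) = 0"
proof -
  obtain K where K: "K \<ge> 0" "\<And>R. R \<ge> max 1 s \<Longrightarrow> J ((lapT ^^ j) u) cz R \<le> K / R"
    using J_decay_bound[OF u ub vb N j] by blast
  define v where "v = (lapT ^^ j) u"
  have cv: "cal v" using cal_pow[OF u] v_def by simp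
  define R1 where "R1 = 1 + s + \<rho> x cz - t0"
  have R1: "R1 \<ge> 1" "R1 \<ge> s" "\<rho> x cz \<le> R1" "-t0 \<le> R1\<^sup>2" "R1 > 0"
  proof -
    show "R1 \<ge> 1" "R1 \<ge> s" "\<rho> x cz \<le> R1" "R1 > 0" using s0 rho_nonneg[of x cz] t0 by (auto simp: R1_def)
    have "R1 \<le> R1\<^sup>2" using \<open>R1 \<ge> 1\<close> by (simp add: power2_eq_square)
    moreover have "-t0 \<le> R1" using s0 rho_nonneg[of x cz] by (simp add: R1_def)
    ultimately show "-t0 \<le> R1\<^sup>2" by linarith
  qed
  define g where "g t = m x * (v (x, t))\<^sup>2" for t
  have cg: "continuous_on {-(R1\<^sup>2)..0} g" unfolding g_def
    by (intro continuous_intros cal_cont[OF cv]) auto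
  have gnn: "0 \<le> g t" for t unfolding g_def using m_pos[of x] by simp
  define I where "I = integral {-(R1\<^sup>2)..0} g"
  have I0: "I \<ge> 0" unfolding I_def using cg gnn by (intro intnonneg) auto
  have IK: "I \<le> K / R" if R: "R \<ge> R1" for R
  proof -
    have Rm: "R \<ge> max 1 s" "R > 0" using R R1 by auto
    have "I \<le> integral {-(R1\<^sup>2)..0} (\<lambda>t. \<Sum>y\<in>ball_rho \<rho> cz R. m y * (v (y, t))\<^sup>2)"
      unfolding I_def
    proof (rule intmono[OF cg])
      show "continuous_on {-(R1\<^sup>2)..0} (\<lambda>t. \<Sum>y\<in>ball_rho \<rho> cz R. m y * (v (y, t))\<^sup>2)"
        using Ig_cont[OF cv] by auto
      fix t
      have xb: "x \<in> ball_rho \<rho> cz R" using R R1 by (simp add: ball_rho_def)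
      show "g t \<le> (\<Sum>y\<in>ball_rho \<rho> cz R. m y * (v (y, t))\<^sup>2)" unfolding g_def
        using ball_fin[OF Rm(2)] xb
        by (intro member_le_sum) (auto intro!: mult_nonneg_nonneg m_pos[THEN less_imp_le])
    qed
    also have "\<dots> = Ig v cz R (R1\<^sup>2)" by (simp add: Ig_def)
    also have "\<dots> \<le> J v cz R" unfolding J_def
      using R R1 by (intro Ig_mono[OF cv]) (auto intro!: power_mono)
    also have "\<dots> \<le> K / R" using K(2)[OF Rm(1)] v_def by simp
    finally show ?thesis .
  qed
  have "I \<le> 0"
  proof (rule tendsto_lowerbound)
    show "((\<lambda>R. K / R) \<longlongrightarrow> 0) at_top"
      by (intro tendsto_divide_0[OF tendsto_const] filterlim_at_top_imp_at_infinity filterlim_ident)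
    show "\<forall>\<^sub>F R in at_top. I \<le> K / R" using IK eventually_at_top_linorder by blast
  qed simp
  hence I00: "I = 0" using I0 by simp
  have "g t0 = 0"
  proof (rule has_integral_0_cbox_imp_0[of "-(R1\<^sup>2)" 0 g])
    show "continuous_on (cbox (-(R1\<^sup>2)) 0) g" using cg by simp
    show "\<And>x. x \<in> box (-(R1\<^sup>2)) 0 \<Longrightarrow> 0 \<le> g x" using gnn by auto
    show "(g has_integral 0) (cbox (-(R1\<^sup>2)) 0)"
      using integrable_integral[OF cint[OF cg]] I00 I_def by simp
    show "box (-(R1\<^sup>2)) 0 \<noteq> {}" using R1 by simp
    show "t0 \<in> cbox (-(R1\<^sup>2)) 0" using R1 t0 by simp
  qed
  thus ?thesis using m_pos[of x] by (simp add: g_def v_def)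
qed

end


definition dlt :: "real \<Rightarrow> (real \<Rightarrow> real) \<Rightarrow> real \<Rightarrow> real" where
  "dlt h g = (\<lambda>t. g t - g (t - h))"

lemma deriv_shift_neg:
  assumes h: "h > 0" and t: "t \<le> 0"
    and d: "(g has_real_derivative D) (at (t - h) within {..0})"
  shows "((\<lambda>s. g (s - h)) has_real_derivative D) (at t within {..0})"
proof -
  have "t - h \<in> interior {..(0::real)}" using h t by simp
  hence "(g has_real_derivative D) (at (t + - h))" using d at_within_interior by fastforce
  hence "((\<lambda>s. g (s + - h)) has_real_derivative D) (at t)" by (simp only: DERIV_shift)
  thus ?thesis by (simp add: has_field_derivative_at_within)
qed

lemma const_on_nonpos:
  assumes "\<And>t. t \<le> 0 \<Longrightarrow> (f has_real_derivative 0) (at t within {..0})"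
  shows "\<exists>c. \<forall>t\<le>0. f t = c"
proof -
  have "\<exists>c. \<forall>t\<in>{..0::real}. f t = c"
    by (rule has_field_derivative_zero_constant) (use assms in auto)
  thus ?thesis by auto
qed

lemma lin_on_nonpos:
  assumes "\<And>t. t \<le> 0 \<Longrightarrow> (f has_real_derivative c) (at t within {..0})"
    and "a \<le> 0" "b \<le> 0"
  shows "f a - f b = c * (a - b)"
proof -
  have "\<And>t. t \<le> 0 \<Longrightarrow> ((\<lambda>s. f s - c * s) has_real_derivative 0) (at t within {..0})"
    using assms(1) by (auto intro!: derivative_eq_intros)
  from const_on_nonpos[OF this] obtain k where "\<forall>t\<le>0. f t - c * t = k" by blast
  hence "f a - c * a = k" "f b - c * b = k" using assms by auto
  thus ?thesis by (simp add: algebra_simps)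
qed

lemma diff_pow:
  fixes Gf :: "nat \<Rightarrow> real \<Rightarrow> real"
  assumes h: "h > 0"
    and fam: "\<And>i t. t \<le> 0 \<Longrightarrow> (Gf i has_real_derivative Gf (Suc i) t) (at t within {..0})"
    and z: "\<And>t. t \<le> 0 \<Longrightarrow> Gf (Suc d) t = 0"
    and t: "t \<le> 0"
  shows "(dlt h ^^ d) (Gf 0) t = h^d * Gf d t"
  using fam z t
proof (induction d arbitrary: Gf t)
  case 0 thus ?case by simp
next
  case (Suc d)
  define Gf' where "Gf' i = dlt h (Gf i)" for i
  have fam': "(Gf' i has_real_derivative Gf' (Suc i) t) (at t within {..0})" if "t \<le> 0" for i t
  proof -
    have "t - h \<le> 0" using that h by simp
    from deriv_shift_neg[OF h that Suc.prems(1)[OF this]]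
    have "((\<lambda>s. Gf i (s - h)) has_real_derivative Gf (Suc i) (t - h)) (at t within {..0})" .
    with Suc.prems(1)[OF that]
    have "((\<lambda>s. Gf i s - Gf i (s - h)) has_real_derivative Gf (Suc i) t - Gf (Suc i) (t - h)) (at t within {..0})"
      by (intro DERIV_diff)
    thus ?thesis by (simp add: Gf'_def dlt_def)
  qed
  have constS: "\<exists>c. \<forall>t\<le>0. Gf (Suc d) t = c"
  proof (rule const_on_nonpos)
    fix t :: real assume t: "t \<le> 0"
    have "(Gf (Suc d) has_real_derivative Gf (Suc (Suc d)) t) (at t within {..0})"
      using Suc.prems(1)[OF t] .
    thus "(Gf (Suc d) has_real_derivative 0) (at t within {..0})" using Suc.prems(2)[OF t] by simp
  qed
  then obtain c where c: "\<And>t. t \<le> 0 \<Longrightarrow> Gf (Suc d) t = c" by blast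
  have z': "Gf' (Suc d) t = 0" if "t \<le> 0" for t
    using c that h by (simp add: Gf'_def dlt_def)
  have IH: "(dlt h ^^ d) (Gf' 0) t = h^d * Gf' d t"
    using Suc.IH[of Gf' t] fam' z' Suc.prems(3) by blast
  have "Gf d t - Gf d (t - h) = c * (t - (t - h))"
    by (rule lin_on_nonpos) (use Suc.prems(1) c Suc.prems(3) h in auto)
  hence "Gf' d t = h * Gf (Suc d) t" using c Suc.prems(3) by (simp add: Gf'_def dlt_def)
  moreover have "(dlt h ^^ Suc d) (Gf 0) = (dlt h ^^ d) (Gf' 0)"
    by (simp only: funpow_Suc_right o_apply Gf'_def)
  ultimately show ?case using IH by simp
qed

lemma dlt_bound:
  assumes "h \<ge> 0" "\<And>s. s \<in> {t - real n * h..t} \<Longrightarrow> \<bar>g s\<bar> \<le> B"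
  shows "\<bar>(dlt h ^^ n) g t\<bar> \<le> 2^n * B"
  using assms(2)
proof (induction n arbitrary: g B)
  case 0 thus ?case by simp
next
  case (Suc n)
  have "\<bar>dlt h g s\<bar> \<le> 2 * B" if s: "s \<in> {t - real n * h..t}" for s
  proof -
    have "s \<in> {t - real (Suc n) * h..t}" "s - h \<in> {t - real (Suc n) * h..t}"
      using s assms(1) by (auto simp: algebra_simps)
    hence "\<bar>g s\<bar> \<le> B" "\<bar>g (s - h)\<bar> \<le> B" using Suc.prems by auto
    thus ?thesis by (simp add: dlt_def)
  qed
  from Suc.IH[OF this] have "\<bar>(dlt h ^^ n) (dlt h g) t\<bar> \<le> 2^n * (2 * B)" .
  thus ?case by (simp only: funpow_Suc_right o_apply) simp
qed


lemma lim_zero_bound: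
  fixes c K k :: real and d :: nat assumes d: "real d > k"
  and bnd: "\<And>h. h \<ge> 1 \<Longrightarrow> \<bar>c\<bar> \<le> K * h powr (k - d)"
  shows "\<bar>c\<bar> \<le> 0"
proof (rule tendsto_lowerbound)
  have "((\<lambda>h. h powr (k - d)) \<longlongrightarrow> 0) at_top"
    using d by (intro tendsto_neg_powr filterlim_ident) auto
  from tendsto_mult[OF tendsto_const[of K] this]
  show "((\<lambda>h. K * h powr (k - d)) \<longlongrightarrow> 0) at_top" by simp
  show "\<forall>\<^sub>F h in at_top. \<bar>c\<bar> \<le> K * h powr (k - d)"
    by (rule eventually_at_top_linorderI[of 1]) (use bnd in auto)
qed simp

context wg begin

definition ub :: "('v \<times> real \<Rightarrow> real) \<Rightarrow> 'v \<Rightarrow> real \<Rightarrow> real \<Rightarrow> bool" where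
  "ub u cz C k \<longleftrightarrow> (\<forall>r>0. \<forall>x\<in>ball_rho \<rho> cz r. \<forall>t\<in>{-(r\<^sup>2)..0}. \<bar>u (x, t)\<bar> \<le> C * (1 + r) powr (2*k))"

lemma C_nonneg:
  assumes "ub u cz C k" shows "C \<ge> 0"
proof -
  have cz: "cz \<in> ball_rho \<rho> cz 1" by (simp add: ball_rho_def rho_refl)
  have t0: "(0::real) \<in> {-(1\<^sup>2)..0}" by simp
  have "\<bar>u (cz, 0)\<bar> \<le> C * (1 + 1) powr (2*k)"
    using assms unfolding ub_def using cz t0 zero_less_one by blast
  hence "0 \<le> C * 2 powr (2*k)" by simp
  thus ?thesis by (simp add: zero_le_mult_iff)
qed

lemma fam_u:
  assumes "cal u" "t \<le> 0"
  shows "((\<lambda>s. (lapT ^^ i) u (x, s)) has_real_derivative (lapT ^^ Suc i) u (x, t)) (at t within {..0})"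
  using cal_pow[OF assms(1), of i] assms(2) unfolding cal_def by simp

lemma diff_u:
  assumes u: "cal u" and h: "h > 0" and z: "\<forall>x t. t \<le> 0 \<longrightarrow> (lapT ^^ Suc d) u (x, t) = 0"
    and t: "t \<le> 0"
  shows "(dlt h ^^ d) (\<lambda>s. u (x, s)) t = h^d * (lapT ^^ d) u (x, t)"
proof -
  define Gf where "Gf i = (\<lambda>s. (lapT ^^ i) u (x, s))" for i
  have "(dlt h ^^ d) (Gf 0) t = h^d * Gf d t"
    by (rule diff_pow[OF h _ _ t]) (use fam_u[OF u] z in \<open>auto simp: Gf_def\<close>)
  thus ?thesis by (simp add: Gf_def)
qed

lemma const_top:
  assumes u: "cal u" and z: "\<forall>x t. t \<le> 0 \<longrightarrow> (lapT ^^ Suc d) u (x, t) = 0" and t: "t \<le> 0"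
  shows "(lapT ^^ d) u (x, t) = (lapT ^^ d) u (x, 0)"
proof -
  have der: "((\<lambda>s. (lapT ^^ d) u (x, s)) has_real_derivative 0) (at s within {..0})" if s: "s \<le> 0" for s
  proof -
    have "((\<lambda>s. (lapT ^^ d) u (x, s)) has_real_derivative (lapT ^^ Suc d) u (x, s)) (at s within {..0})"
      by (rule fam_u[OF u s])
    moreover have "(lapT ^^ Suc d) u (x, s) = 0" using z s by blast
    ultimately show ?thesis by simp
  qed
  have "(lapT ^^ d) u (x, t) - (lapT ^^ d) u (x, 0) = 0 * (t - 0)"
    using lin_on_nonpos[where f="\<lambda>s. (lapT ^^ d) u (x, s)" and c=0 and a=t and b=0, OF der t] by simp
  thus ?thesis by simp
qed

lemma bound_diff:
  assumes u: "ub u cz C k" and h: "h \<ge> 0" and R: "R > 0" "\<rho> x cz \<le> R" "real n * h \<le> R\<^sup>2"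
  shows "\<bar>(dlt h ^^ n) (\<lambda>s. u (x, s)) 0\<bar> \<le> 2^n * (C * (1 + R) powr (2*k))"
proof (rule dlt_bound[OF h])
  fix s assume s: "s \<in> {0 - real n * h..0}"
  hence "s \<in> {-(R\<^sup>2)..0}" using R by auto
  moreover have "x \<in> ball_rho \<rho> cz R" using R by (simp add: ball_rho_def)
  ultimately show "\<bar>u (x, s)\<bar> \<le> C * (1 + R) powr (2*k)" using u R unfolding ub_def by blast
qed

lemma degree_red:
  assumes u: "cal u" and b: "ub u cz C k" and k: "k \<ge> 0" and d: "real d > k"
    and z: "\<forall>x t. t \<le> 0 \<longrightarrow> (lapT ^^ Suc d) u (x, t) = 0"
  shows "\<forall>x t. t \<le> 0 \<longrightarrow> (lapT ^^ d) u (x, t) = 0"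
proof (intro allI impI)
  fix x and t :: real assume t: "t \<le> 0"
  define c where "c = (lapT ^^ d) u (x, 0)"
  define A where "A = (2 + \<rho> x cz + sqrt d) powr (2*k)"
  have C0: "C \<ge> 0" using C_nonneg[OF b] .
  have bnd: "\<bar>c\<bar> \<le> 2^d * C * A * h powr (k - d)" if h: "h \<ge> 1" for h
  proof -
    define R where "R = \<rho> x cz + sqrt (d * h) + 1"
    have R: "R > 0" "\<rho> x cz \<le> R" "real d * h \<le> R\<^sup>2"
    proof -
      have sq: "sqrt (d * h) \<ge> 0" using h by simp
      show "R > 0" "\<rho> x cz \<le> R" unfolding R_def using sq rho_nonneg[of x cz] by linarith+
      have "sqrt (d * h) \<le> R" using rho_nonneg[of x cz] by (simp add: R_def)
      hence "(sqrt (d * h))\<^sup>2 \<le> R\<^sup>2" using sq by (intro power_mono) auto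
      thus "real d * h \<le> R\<^sup>2" using h by simp
    qed
    have dd: "(dlt h ^^ d) (\<lambda>s. u (x, s)) 0 = h^d * c"
      unfolding c_def by (rule diff_u[OF u _ z]) (use h in auto)
    have e: "\<bar>h^d * c\<bar> \<le> 2^d * (C * (1 + R) powr (2*k))"
      unfolding dd[symmetric] by (rule bound_diff[OF b _ R]) (use h in auto)
    have "1 + R \<le> (2 + \<rho> x cz + sqrt d) * sqrt h"
    proof -
      have sh: "sqrt h \<ge> 1" using h by simp
      have "2 + \<rho> x cz \<le> (2 + \<rho> x cz) * sqrt h"
        using sh rho_nonneg[of x cz] by (simp add: mult_le_cancel_left1)
      moreover have "1 + R = (2 + \<rho> x cz) + sqrt d * sqrt h" by (simp add: R_def real_sqrt_mult)
      moreover have "(2 + \<rho> x cz + sqrt d) * sqrt h = (2 + \<rho> x cz) * sqrt h + sqrt d * sqrt h"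
        by (simp only: distrib_right)
      ultimately show ?thesis by linarith
    qed
    hence "(1 + R) powr (2*k) \<le> ((2 + \<rho> x cz + sqrt d) * sqrt h) powr (2*k)"
      using R k by (intro powr_mono2) auto
    also have "\<dots> = A * h powr k"
    proof -
      have "(sqrt h) powr (2*k) = (h powr (1/2)) powr (2*k)"
        using h by (simp add: powr_half_sqrt)
      also have "\<dots> = h powr k" by (simp add: powr_powr)
      finally have "(sqrt h) powr (2*k) = h powr k" .
      thus ?thesis unfolding A_def using h rho_nonneg[of x cz]
        by (simp add: powr_mult)
    qed
    finally have p: "(1 + R) powr (2*k) \<le> A * h powr k" .
    have hc: "h^d * \<bar>c\<bar> \<le> 2^d * (C * (A * h powr k))"
    proof -
      have "h^d * \<bar>c\<bar> = \<bar>h^d * c\<bar>" using h by (simp add: abs_mult)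
      also have "\<dots> \<le> 2^d * (C * (1 + R) powr (2*k))" by (rule e)
      also have "\<dots> \<le> 2^d * (C * (A * h powr k))"
        using p C0 by (intro mult_left_mono) auto
      finally show ?thesis .
    qed
    have c1: "\<bar>c\<bar> \<le> 2^d * (C * (A * h powr k)) / h^d"
    proof -
      have hp: "0 < h^d" using h by simp
      show ?thesis unfolding pos_le_divide_eq[OF hp] using hc by (simp add: mult.commute)
    qed
    have hd: "h^d = h powr (real d)" using h by (simp add: powr_realpow)
    have "2^d * (C * (A * h powr k)) / h^d = 2^d * C * A * (h powr k / h powr (real d))"
      unfolding hd by simp
    also have "\<dots> = 2^d * C * A * h powr (k - d)" by (simp add: powr_diff)
    finally have "2^d * (C * (A * h powr k)) / h^d = 2^d * C * A * h powr (k - d)" .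
    with c1 show ?thesis by simp
  qed
  have "\<bar>c\<bar> \<le> 0" by (rule lim_zero_bound[OF d bnd])
  hence "c = 0" by simp
  thus "(lapT ^^ d) u (x, t) = 0" using const_top[OF u z t] c_def by simp
qed

lemma harm_mem:
  assumes u: "cal u" and b: "ub u cz C k" and k: "k \<ge> 0"
    and z: "\<forall>x t. t \<le> 0 \<longrightarrow> (lapT ^^ Suc n) u (x, t) = 0"
  shows "(\<lambda>x. (lapT ^^ n) u (x, 0)) \<in> harmonic_poly adj w m \<rho> (2*k)"
  unfolding harmonic_poly_def
proof (intro CollectI conjI allI exI ballI impI)
  fix x
  show "lap (\<lambda>x. (lapT ^^ n) u (x, 0)) x = 0"
    using z by (simp add: lapT_apply[symmetric])
next
  fix R :: real and x assume R: "R > 0" and x: "x \<in> ball_rho \<rho> cz R"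
  have C0: "C \<ge> 0" using C_nonneg[OF b] .
  define R' where "R' = R + sqrt n"
  have R': "R' > 0" "\<rho> x cz \<le> R'" "real n * 1 \<le> R'\<^sup>2"
  proof -
    have sq: "sqrt (real n) \<ge> 0" by simp
    have "\<rho> x cz \<le> R" using x by (simp add: ball_rho_def)
    thus "R' > 0" "\<rho> x cz \<le> R'" unfolding R'_def using sq R by linarith+
    have "sqrt n \<le> R'" using R by (simp add: R'_def)
    hence "(sqrt n)\<^sup>2 \<le> R'\<^sup>2" by (intro power_mono) auto
    thus "real n * 1 \<le> R'\<^sup>2" by simp
  qed
  have dd: "(dlt 1 ^^ n) (\<lambda>s. u (x, s)) 0 = 1^n * (lapT ^^ n) u (x, 0)"
    by (rule diff_u[OF u _ z]) auto
  have "\<bar>(dlt 1 ^^ n) (\<lambda>s. u (x, s)) 0\<bar> \<le> 2^n * (C * (1 + R') powr (2*k))"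
    by (rule bound_diff[OF b _ R']) auto
  hence "\<bar>(lapT ^^ n) u (x, 0)\<bar> \<le> 2^n * (C * (1 + R') powr (2*k))"
    unfolding dd by simp
  also have "(1 + R') powr (2*k) \<le> ((1 + sqrt n) * (1 + R)) powr (2*k)"
    using R k by (intro powr_mono2) (auto simp: R'_def algebra_simps)
  hence "2^n * (C * (1 + R') powr (2*k)) \<le> 2^n * (C * (((1 + sqrt n) * (1 + R)) powr (2*k)))"
    using C0 by (intro mult_left_mono) auto
  also have "\<dots> = (2^n * C * (1 + sqrt n) powr (2*k)) * (1 + R) powr (2*k)"
    using R by (simp add: powr_mult)
  finally show "\<bar>(lapT ^^ n) u (x, 0)\<bar> \<le> (2^n * C * (1 + sqrt n) powr (2*k)) * (1 + R) powr (2*k)" .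
qed

end


context wg begin

lemma lapT_linear: "linear lapT"
proof (rule linearI)
  fix u v :: "'v \<times> real \<Rightarrow> real"
  show "lapT (u + v) = lapT u + lapT v"
    by (rule ext) (simp add: lapT_def laplacian_def sum.distrib[symmetric] algebra_simps add_divide_distrib diff_divide_distrib)
next
  fix c :: real and u :: "'v \<times> real \<Rightarrow> real"
  show "lapT (c *\<^sub>R u) = c *\<^sub>R lapT u"
    by (rule ext) (simp add: lapT_def laplacian_def sum_distrib_left algebra_simps diff_divide_distrib)
qed

lemma lapT_pow_linear: "linear (lapT ^^ n)"
proof (induction n)
  case 0 thus ?case by (simp add: linear_ident)
next
  case (Suc n)
  have "linear (lapT \<circ> (lapT ^^ n))" by (rule linear_compose[OF Suc.IH lapT_linear])
  thus ?case by (simp only: funpow.simps(2))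
qed

lemma eval0_linear: "linear (\<lambda>f :: 'v \<times> real \<Rightarrow> real. \<lambda>x. f (x, 0))"
  by (rule linearI) (auto simp: plus_fun_def)

definition Lmap :: "nat \<Rightarrow> ('v \<times> real \<Rightarrow> real) \<Rightarrow> 'v \<Rightarrow> real" where
  "Lmap n u = (\<lambda>x. (lapT ^^ n) u (x, 0))"

lemma Lmap_linear: "linear (Lmap n)"
proof -
  have "linear ((\<lambda>f :: 'v \<times> real \<Rightarrow> real. \<lambda>x. f (x, 0)) \<circ> (lapT ^^ n))"
    by (rule linear_compose[OF lapT_pow_linear eval0_linear])
  thus ?thesis by (simp add: Lmap_def[abs_def] o_def)
qed

lemma cal_add: "cal u \<Longrightarrow> cal v \<Longrightarrow> cal (u + v)"
  unfolding cal_def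
proof (intro allI impI)
  fix x and t :: real assume u: "\<forall>x. \<forall>t\<le>0. ((\<lambda>s. u (x, s)) has_real_derivative lapT u (x, t)) (at t within {..0})"
    and v: "\<forall>x. \<forall>t\<le>0. ((\<lambda>s. v (x, s)) has_real_derivative lapT v (x, t)) (at t within {..0})"
    and t: "t \<le> 0"
  have "((\<lambda>s. u (x, s) + v (x, s)) has_real_derivative lapT u (x, t) + lapT v (x, t)) (at t within {..0})"
    using u v t by (intro DERIV_add) auto
  moreover have "lapT (u + v) = lapT u + lapT v" using linear_add[OF lapT_linear] by simp
  ultimately show "((\<lambda>s. (u + v) (x, s)) has_real_derivative lapT (u + v) (x, t)) (at t within {..0})"
    by simp
qed

lemma cal_scale: "cal u \<Longrightarrow> cal (c *\<^sub>R u)"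
  unfolding cal_def
proof (intro allI impI)
  fix x and t :: real assume u: "\<forall>x. \<forall>t\<le>0. ((\<lambda>s. u (x, s)) has_real_derivative lapT u (x, t)) (at t within {..0})"
    and t: "t \<le> 0"
  have "((\<lambda>s. c * u (x, s)) has_real_derivative c * lapT u (x, t)) (at t within {..0})"
    using u t by (intro DERIV_cmult) auto
  moreover have "lapT (c *\<^sub>R u) = c *\<^sub>R lapT u" using linear_scale[OF lapT_linear] by simp
  ultimately show "((\<lambda>s. (c *\<^sub>R u) (x, s)) has_real_derivative lapT (c *\<^sub>R u) (x, t)) (at t within {..0})"
    by simp
qed

lemma cal_zero: "cal 0"
  unfolding cal_def by (simp add: lapT_def laplacian_def)

definition Sp :: "'v \<Rightarrow> real \<Rightarrow> ('v \<times> real \<Rightarrow> real) set" where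
  "Sp cz k = {u. (\<forall>x t. t > 0 \<longrightarrow> u (x, t) = 0) \<and> cal u \<and> (\<exists>C. ub u cz C k)}"

definition Qs :: "'v \<Rightarrow> real \<Rightarrow> nat \<Rightarrow> ('v \<times> real \<Rightarrow> real) set" where
  "Qs cz k n = {u \<in> Sp cz k. \<forall>x t. t \<le> 0 \<longrightarrow> (lapT ^^ n) u (x, t) = 0}"

lemma Qs_subspace: assumes k: "k \<ge> 0" shows "subspace (Qs cz k n)"
  unfolding subspace_def
proof (intro conjI ballI allI)
  show "0 \<in> Qs cz k n"
  proof -
    have "ub 0 cz 0 k" by (simp add: ub_def)
    moreover have "(lapT ^^ n) 0 = 0" using linear_0[OF lapT_pow_linear] .
    ultimately show ?thesis by (auto simp: Qs_def Sp_def cal_zero)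
  qed
next
  fix u v assume u: "u \<in> Qs cz k n" and v: "v \<in> Qs cz k n"
  obtain C1 C2 where C: "ub u cz C1 k" "ub v cz C2 k" using u v by (auto simp: Qs_def Sp_def)
  have "ub (u + v) cz (C1 + C2) k" unfolding ub_def
  proof (intro allI impI ballI)
    fix r :: real and x t assume "r > 0" "x \<in> ball_rho \<rho> cz r" "t \<in> {-(r\<^sup>2)..0}"
    hence "\<bar>u (x, t)\<bar> \<le> C1 * (1 + r) powr (2*k)" "\<bar>v (x, t)\<bar> \<le> C2 * (1 + r) powr (2*k)"
      using C unfolding ub_def by blast+
    thus "\<bar>(u + v) (x, t)\<bar> \<le> (C1 + C2) * (1 + r) powr (2*k)" by (simp add: algebra_simps)
  qed
  moreover have "(lapT ^^ n) (u + v) = (lapT ^^ n) u + (lapT ^^ n) v"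
    using linear_add[OF lapT_pow_linear] .
  ultimately show "u + v \<in> Qs cz k n" using u v cal_add by (auto simp: Qs_def Sp_def)
next
  fix c :: real and u assume u: "u \<in> Qs cz k n"
  obtain C1 where C: "ub u cz C1 k" using u by (auto simp: Qs_def Sp_def)
  have "ub (c *\<^sub>R u) cz (\<bar>c\<bar> * C1) k" unfolding ub_def
  proof (intro allI impI ballI)
    fix r :: real and x t assume "r > 0" "x \<in> ball_rho \<rho> cz r" "t \<in> {-(r\<^sup>2)..0}"
    hence "\<bar>u (x, t)\<bar> \<le> C1 * (1 + r) powr (2*k)" using C unfolding ub_def by blast
    hence "\<bar>c\<bar> * \<bar>u (x, t)\<bar> \<le> \<bar>c\<bar> * (C1 * (1 + r) powr (2*k))" by (intro mult_left_mono) auto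
    thus "\<bar>(c *\<^sub>R u) (x, t)\<bar> \<le> (\<bar>c\<bar> * C1) * (1 + r) powr (2*k)" by (simp add: abs_mult mult.assoc)
  qed
  moreover have "(lapT ^^ n) (c *\<^sub>R u) = c *\<^sub>R (lapT ^^ n) u"
    using linear_scale[OF lapT_pow_linear] .
  ultimately show "c *\<^sub>R u \<in> Qs cz k n" using u cal_scale by (auto simp: Qs_def Sp_def)
qed

lemma fdim_nonneg: "0 \<le> fdim S"
proof -
  have "{} \<in> {F. finite F \<and> F \<subseteq> S \<and> lin_indep_fun F}" by (simp add: lin_indep_fun_def)
  hence "ereal (real (card ({} :: ('a \<Rightarrow> real) set))) \<le> fdim S"
    unfolding fdim_def by (rule SUP_upper)
  thus ?thesis by (simp add: zero_ereal_def)
qed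

lemma indep_le_fdim:
  assumes "finite B" "B \<subseteq> S" "independent B"
  shows "ereal (real (card B)) \<le> fdim S"
  unfolding fdim_def using assms lin_indep_iff by (intro SUP_upper) auto

lemma Qs_bound:
  assumes k: "k \<ge> 0"
  shows "finite F \<Longrightarrow> F \<subseteq> Qs cz k n \<Longrightarrow> independent F \<Longrightarrow>
    ereal (real (card F)) \<le> ereal (real n) * fdim (harmonic_poly adj w m \<rho> (2*k))"
proof (induction n arbitrary: F)
  case 0
  have "F \<subseteq> {0}"
  proof
    fix u assume "u \<in> F"
    hence u: "u \<in> Qs cz k 0" using 0 by auto
    have "u (x, t) = 0" for x t using u by (cases "t > 0") (auto simp: Qs_def Sp_def)
    thus "u \<in> {0}" by (auto simp: zero_fun_def)
  qed
  moreover have "0 \<notin> F"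
  proof
    assume "0 \<in> F"
    hence "dependent F" by (rule dependent_zero)
    thus False using 0(3) by simp
  qed
  ultimately have "F = {}" by auto
  thus ?case by (simp add: zero_ereal_def[symmetric])
next
  case (Suc n)
  let ?H = "harmonic_poly adj w m \<rho> (2*k)"
  obtain B1 B2 where B: "B1 \<subseteq> span F" "\<forall>b\<in>B1. Lmap n b = 0" "independent B1" "finite B1"
    "B2 \<subseteq> Lmap n ` F" "independent B2" "finite B2" "card F \<le> card B1 + card B2"
    using rank_nullity_sets[OF Lmap_linear[of n] Suc.prems(1) Suc.prems(3)] by blast
  have spanF: "span F \<subseteq> Qs cz k (Suc n)"
    using span_minimal[OF Suc.prems(2) Qs_subspace[OF k]] .
  have B1Q: "B1 \<subseteq> Qs cz k n"
  proof
    fix b assume b: "b \<in> B1"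
    hence bQ: "b \<in> Qs cz k (Suc n)" using B(1) spanF by blast
    hence cb: "cal b" and z: "\<forall>x t. t \<le> 0 \<longrightarrow> (lapT ^^ Suc n) b (x, t) = 0"
      by (auto simp: Qs_def Sp_def)
    have "(lapT ^^ n) b (x, t) = 0" if "t \<le> 0" for x t
    proof -
      have "Lmap n b x = 0" using B(2) b by simp
      hence "(lapT ^^ n) b (x, 0) = 0" by (simp add: Lmap_def)
      thus ?thesis using const_top[OF cb z that] by simp
    qed
    thus "b \<in> Qs cz k n" using bQ by (auto simp: Qs_def)
  qed
  have B2H: "B2 \<subseteq> ?H"
  proof
    fix y assume "y \<in> B2"
    then obtain u where u: "u \<in> F" "y = Lmap n u" using B(5) by blast
    hence uQ: "u \<in> Qs cz k (Suc n)" using Suc.prems(2) by blast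
    then obtain C where "ub u cz C k" "cal u" "\<forall>x t. t \<le> 0 \<longrightarrow> (lapT ^^ Suc n) u (x, t) = 0"
      by (auto simp: Qs_def Sp_def)
    from harm_mem[OF this(2) this(1) k this(3)] show "y \<in> ?H" using u by (simp add: Lmap_def)
  qed
  have i1: "ereal (real (card B1)) \<le> ereal (real n) * fdim ?H"
    using Suc.IH[OF B(4) B1Q B(3)] .
  have i2: "ereal (real (card B2)) \<le> fdim ?H" using indep_le_fdim[OF B(7) B2H B(6)] .
  have "ereal (real (card F)) \<le> ereal (real (card B1)) + ereal (real (card B2))"
    using B(8) by simp
  also have "\<dots> \<le> ereal (real n) * fdim ?H + fdim ?H" using i1 i2 by (rule add_mono)
  also have "\<dots> = ereal (real (Suc n)) * fdim ?H"
  proof -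
    have "ereal (real (Suc n)) * fdim ?H = fdim ?H * (ereal (real n) + 1)"
      by (simp add: mult.commute add.commute)
    also have "\<dots> = fdim ?H * ereal (real n) + fdim ?H * 1"
      by (rule ereal_right_distrib) auto
    finally show ?thesis by (simp add: mult.commute)
  qed
  finally show ?case .
qed

end


context wg begin

lemma recenter:
  assumes u: "u \<in> ancient_poly adj w m \<rho> (2 * k)" and k: "k \<ge> 0"
  shows "\<exists>C. ub u cz C k"
proof -
  obtain x0 C where b: "\<forall>R>0. \<forall>x\<in>ball_rho \<rho> x0 R. \<forall>t\<in>{-(R\<^sup>2)..0}. \<bar>u (x, t)\<bar> \<le> C * (1 + R) powr (2 * k)"
    using u unfolding ancient_poly_def by blast
  have C0: "C \<ge> 0"
  proof -
    have x0: "x0 \<in> ball_rho \<rho> x0 1" by (simp add: ball_rho_def rho_refl)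
    have t0: "(0::real) \<in> {-(1\<^sup>2)..0}" by simp
    have "\<bar>u (x0, 0)\<bar> \<le> C * (1 + 1) powr (2 * k)" using b x0 t0 zero_less_one by blast
    hence "0 \<le> C * 2 powr (2*k)" by simp
    thus ?thesis by (simp add: zero_le_mult_iff)
  qed
  define d where "d = \<rho> cz x0"
  have d0: "d \<ge> 0" using rho_nonneg by (simp add: d_def)
  have "ub u cz (C * (1 + d) powr (2*k)) k" unfolding ub_def
  proof (intro allI impI ballI)
    fix r :: real and x t assume r: "r > 0" and x: "x \<in> ball_rho \<rho> cz r" and t: "t \<in> {-(r\<^sup>2)..0}"
    define R where "R = r + d"
    have R: "R > 0" using r d0 by (simp add: R_def)
    have xR: "x \<in> ball_rho \<rho> x0 R"
      using x rho_tri[of x x0 cz] by (simp add: ball_rho_def R_def d_def)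
    have "r\<^sup>2 \<le> R\<^sup>2" using r d0 by (simp add: R_def power_mono)
    hence tR: "t \<in> {-(R\<^sup>2)..0}" using t by auto
    have "\<bar>u (x, t)\<bar> \<le> C * (1 + R) powr (2 * k)" using b R xR tR by blast
    also have "(1 + R) powr (2*k) \<le> ((1 + d) * (1 + r)) powr (2*k)"
      using r d0 k by (intro powr_mono2) (auto simp: R_def algebra_simps)
    hence "C * (1 + R) powr (2 * k) \<le> C * ((1 + d) * (1 + r)) powr (2*k)"
      using C0 by (intro mult_left_mono) auto
    also have "\<dots> = C * (1 + d) powr (2*k) * (1 + r) powr (2*k)"
      using r d0 by (simp add: powr_mult)
    finally show "\<bar>u (x, t)\<bar> \<le> C * (1 + d) powr (2 * k) * (1 + r) powr (2 * k)" .
  qed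
  thus ?thesis by blast
qed

lemma down:
  assumes u: "cal u" and b: "ub u cz C k" and k: "k \<ge> 0" and D: "real D > k"
  shows "(\<forall>x t. t \<le> 0 \<longrightarrow> (lapT ^^ (D + M)) u (x, t) = 0) \<Longrightarrow>
         (\<forall>x t. t \<le> 0 \<longrightarrow> (lapT ^^ D) u (x, t) = 0)"
proof (induction M)
  case 0 thus ?case by simp
next
  case (Suc M)
  have z: "\<forall>x t. t \<le> 0 \<longrightarrow> (lapT ^^ Suc (D + M)) u (x, t) = 0" using Suc.prems by simp
  have "real (D + M) > k" using D by simp
  from degree_red[OF u b k this z] show ?case by (rule Suc.IH)
qed

lemma in_Qs:
  assumes u: "u \<in> ancient_poly adj w m \<rho> (2 * k)" and k: "k \<ge> 0"
    and vb: "\<forall>r>0. (\<Sum>y\<in>ball_rho \<rho> cz r. m y) \<le> Cv * (1 + r) powr a"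
    and D: "real D > k"
  shows "u \<in> Qs cz k D"
proof -
  have norm: "\<forall>x t. t > 0 \<longrightarrow> u (x, t) = 0" using u by (simp add: ancient_poly_def)
  have cu: "cal u" using u unfolding ancient_poly_def cal_def by (simp add: lapT_apply)
  obtain C where b: "ub u cz C k" using recenter[OF u k] by blast
  define N where "N = nat \<lceil>a + 4*k\<rceil>"
  have N: "a + 4*k \<le> real N" unfolding N_def by linarith
  define M where "M = N + 3"
  have z: "\<forall>x t. t \<le> 0 \<longrightarrow> (lapT ^^ (D + M)) u (x, t) = 0"
  proof (intro allI impI)
    fix x and t :: real assume t: "t \<le> 0"
    show "(lapT ^^ (D + M)) u (x, t) = 0"
      by (rule decay[OF cu _ vb N _ t]) (use b in \<open>auto simp: ub_def M_def\<close>)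
  qed
  have "\<forall>x t. t \<le> 0 \<longrightarrow> (lapT ^^ D) u (x, t) = 0" using down[OF cu b k D z] .
  thus ?thesis using norm cu b by (auto simp: Qs_def Sp_def)
qed

end

theorem theorem1p2:
  fixes adj :: "'v \<Rightarrow> 'v \<Rightarrow> bool" and w :: "'v \<Rightarrow> 'v \<Rightarrow> real" and m :: "'v \<Rightarrow> real"
    and \<rho> :: "'v \<Rightarrow> 'v \<Rightarrow> real" and k :: real
  assumes G: "weighted_graph adj w m"
    and intr: "intrinsic_metric adj w m \<rho>"
    and balls_finite: "\<forall>x. \<forall>R>0. finite (ball_rho \<rho> x R)"
    and jump: "bdd_above {\<rho> x y | x y. adj x y}"
    and growth: "\<exists>x0 \<alpha> C. \<forall>R>0. (\<Sum>y\<in>ball_rho \<rho> x0 R. m y) \<le> C * (1 + R) powr \<alpha>"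
    and k: "k \<ge> 1"
  shows "fdim (ancient_poly adj w m \<rho> (2 * k)) \<le> ereal (k + 1) * fdim (harmonic_poly adj w m \<rho> (2 * k))"
proof -
  define S where "S = {\<rho> x y | x y. adj x y}"
  define s where "s = max 0 (Sup S)"
  have jmp: "\<forall>x y. adj x y \<longrightarrow> \<rho> x y \<le> s"
  proof (intro allI impI)
    fix x y assume "adj x y"
    hence "\<rho> x y \<in> S" by (auto simp: S_def)
    hence "\<rho> x y \<le> Sup S" using jump by (intro cSup_upper) (auto simp: S_def)
    thus "\<rho> x y \<le> s" by (simp add: s_def)
  qed
  interpret wg adj w m \<rho> s
    by unfold_locales (use G intr balls_finite jmp in \<open>auto simp: s_def\<close>)
  obtain cz a Cv where vb: "\<forall>r>0. (\<Sum>y\<in>ball_rho \<rho> cz r. m y) \<le> Cv * (1 + r) powr a"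
    using growth by blast
  define D where "D = nat \<lfloor>k\<rfloor> + 1"
  have D: "real D > k" "real D \<le> k + 1" using k by (auto simp: D_def) linarith+
  have k0: "k \<ge> 0" using k by simp
  let ?H = "harmonic_poly adj w m \<rho> (2 * k)"
  show ?thesis
    unfolding fdim_def[of "ancient_poly adj w m \<rho> (2 * k)"]
  proof (rule SUP_least)
    fix F assume F: "F \<in> {F. finite F \<and> F \<subseteq> ancient_poly adj w m \<rho> (2 * k) \<and> lin_indep_fun F}"
    hence fin: "finite F" and ind: "independent F" using lin_indep_iff by auto
    have sub: "F \<subseteq> Qs cz k D" using F in_Qs[OF _ k0 vb D(1)] by blast
    have "ereal (real (card F)) \<le> ereal (real D) * fdim ?H"
      using Qs_bound[OF k0 fin sub ind] .
    also have "\<dots> \<le> ereal (k + 1) * fdim ?H"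
      using D(2) fdim_nonneg by (intro ereal_mult_right_mono) auto
    finally show "ereal (real (card F)) \<le> ereal (k + 1) * fdim ?H" .
  qed
qed


end
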